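(* Let $x_1,\dots,x_N$ be contexts and $\xi_1,\dots,\xi_N$ noises. For each $i$, let $\mathcal Y(x_i)\subset\mathbb R^{d(x_i)}$ be finite with no element a strict convex combination of others, $Y(x_i)$ the matrix with columns $y\in\mathcal Y(x_i)$, $\gamma_i=(c(x_i,y,\xi_i))_{y\in\mathcal Y(x_i)}$ for a cost $c$, and $\Omega_{\Delta^{\mathcal Y(x_i)}}$ a proper l.s.c. convex function with domain $\Delta^{\mathcal Y(x_i)}$ whose restriction to the affine hull of $\Delta^{\mathcal Y(x_i)}$ is Legendre-type. Let $\varphi_w$, $w\in\mathcal W$, be a statistical model with $\varphi_w(x_i)\in\mathbb R^{d(x_i)}$, and $\kappa>0$. Define $S(s,q;x_i,\xi_i)=\langle\gamma_i|q\rangle+\kappa\mathcal L_{\Omega_{\Delta^{\mathcal Y(x_i)}}}(s;q)$ and $\mathcal S_N(s_\otimes,q_\otimes)=\frac1N\sum_iS(s_i,q_i;x_i,\xi_i)$. Consider the scheme started from $\bar w^{(0)}$: $$q_\otimes^{(t+1)}=\operatorname*{argmin}_{q_\otimes\in\prod_i\Delta^{\mathcal Y(x_i)}}\mathcal S_N\big((Y(x_i)^\top\varphi_{\bar w^{(t)}}(x_i))_i,q_\otimes\big),\qquad \bar w^{(t+1)}\in\operatorname*{argmin}_{w\in\mathcal W}\mathcal S_N\big((Y(x_i)^\top\varphi_w(x_i))_i,q_\otimes^{(t+1)}\big).$$ Then these updates can be recast as: for each $i$, $$q_i^{(t+1)}=\operatorname*{argmin}_{q_i\in\Delta^{\mathcal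 Y(x_i)}}S\big(Y(x_i)^\top\varphi_{\bar w^{(t)}}(x_i),q_i;x_i,\xi_i\big)=\nabla\Omega^*_{\Delta^{\mathcal Y(x_i)}}\Big(Y(x_i)^\top\varphi_{\bar w^{(t)}}(x_i)-\tfrac1\kappa\gamma_i\Big),$$ so that $\mu_i^{(t+1)}:=Y(x_i)q_i^{(t+1)}$ is the expectation of $\mathbf y$ under the distribution $\nabla\Omega^*_{\Delta^{\mathcal Y(x_i)}}\big(Y(x_i)^\top\varphi_{\bar w^{(t)}}(x_i)-\frac1\kappa\gamma_i\big)$, and $$\bar w^{(t+1)}\in\operatorname*{argmin}_{w\in\mathcal W}\frac1N\sum_{i=1}^N\mathcal L_{\Omega_{\mathcal C(x_i)}}\big(\varphi_w(x_i);Y(x_i)q_i^{(t+1)}\big),$$ where $\Omega_{\mathcal C(x)}(\mu):=\min\{\Omega_{\Delta^{\mathcal Y(x)}}(q):q\in\Delta^{\mathcal Y(x)},\ Y(x)q=\mu\}$ on $\mathcal C(x)=\operatorname{conv}(\mathcal Y(x))$.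
   Context: $\Delta^{\mathcal Y}=\{q\in\mathbb R^{\mathcal Y}:q\ge0,\sum_yq_y=1\}$. Legendre-type: strictly convex on the interior of its domain and essentially smooth (with respect to the affine hull's metric for restrictions). For a convex function $\Omega$, $\Omega^*$ denotes its Fenchel conjugate and $\mathcal L_\Omega(\theta;\mu)=\Omega(\mu)+\Omega^*(\theta)-\langle\theta|\mu\rangle$ its Fenchel–Young loss; $\Omega_{\mathcal C(x)}$ is $+\infty$ outside $\mathcal C(x)$. *)

theory Defs
  imports "HOL-Analysis.Analysis"
begin

text \<open>Vectors of R^d are modelled as functions nat => real vanishing at coordinates >= d;
  elements of R^Y (for a finite label set Y of such vectors) as functions vec => real
  vanishing outside Y.\<close>

type_synonym vec = "nat \<Rightarrow> real"
type_synonym dvec = "vec \<Rightarrow> real"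

definition Rd :: "nat \<Rightarrow> vec set" where
  "Rd d = {v. \<forall>k\<ge>d. v k = 0}"

definition ipd :: "nat \<Rightarrow> vec \<Rightarrow> vec \<Rightarrow> real" where
  "ipd d a b = (\<Sum>k<d. a k * b k)"

definition RY :: "vec set \<Rightarrow> dvec set" where
  "RY Y = {q. \<forall>v. v \<notin> Y \<longrightarrow> q v = 0}"

definition ipY :: "vec set \<Rightarrow> dvec \<Rightarrow> dvec \<Rightarrow> real" where
  "ipY Y a b = (\<Sum>y\<in>Y. a y * b y)"

definition nrmY :: "vec set \<Rightarrow> dvec \<Rightarrow> real" where
  "nrmY Y a = sqrt (ipY Y a a)"

definition prob_simplex :: "vec set \<Rightarrow> dvec set" where
  "prob_simplex Y = {q \<in> RY Y. (\<forall>y\<in>Y. 0 \<le> q y) \<and> sum q Y = 1}"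

definition ri_simplex :: "vec set \<Rightarrow> dvec set" where
  "ri_simplex Y = {q \<in> prob_simplex Y. \<forall>y\<in>Y. 0 < q y}"

definition tangent :: "vec set \<Rightarrow> dvec set" where
  "tangent Y = {h \<in> RY Y. sum h Y = 0}"

definition Ymat :: "vec set \<Rightarrow> dvec \<Rightarrow> vec" where
  "Ymat Y q = (\<lambda>k. \<Sum>y\<in>Y. q y * y k)"

definition YmatT :: "nat \<Rightarrow> vec set \<Rightarrow> vec \<Rightarrow> dvec" where
  "YmatT d Y \<phi> = (\<lambda>y. if y \<in> Y then ipd d y \<phi> else 0)"

definition has_grad_along :: "vec set \<Rightarrow> dvec set \<Rightarrow> (dvec \<Rightarrow> real) \<Rightarrow> dvec \<Rightarrow> dvec \<Rightarrow> bool" where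
  "has_grad_along Y T f q g \<longleftrightarrow> g \<in> T \<and>
     (\<forall>e>0. \<exists>\<delta>>0. \<forall>h\<in>T. nrmY Y h < \<delta> \<longrightarrow>
        \<bar>f (\<lambda>v. q v + h v) - f q - ipY Y g h\<bar> \<le> e * nrmY Y h)"

definition conjY :: "vec set \<Rightarrow> (dvec \<Rightarrow> ereal) \<Rightarrow> dvec \<Rightarrow> ereal" where
  "conjY Y \<Omega> \<theta> = (SUP q\<in>RY Y. ereal (ipY Y \<theta> q) - \<Omega> q)"

definition fyY :: "vec set \<Rightarrow> (dvec \<Rightarrow> ereal) \<Rightarrow> dvec \<Rightarrow> dvec \<Rightarrow> ereal" where
  "fyY Y \<Omega> \<theta> q = \<Omega> q + conjY Y \<Omega> \<theta> - ereal (ipY Y \<theta> q)"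

definition conjd :: "nat \<Rightarrow> (vec \<Rightarrow> ereal) \<Rightarrow> vec \<Rightarrow> ereal" where
  "conjd d F \<theta> = (SUP \<mu>\<in>Rd d. ereal (ipd d \<theta> \<mu>) - F \<mu>)"

definition fyd :: "nat \<Rightarrow> (vec \<Rightarrow> ereal) \<Rightarrow> vec \<Rightarrow> vec \<Rightarrow> ereal" where
  "fyd d F \<theta> \<mu> = F \<mu> + conjd d F \<theta> - ereal (ipd d \<theta> \<mu>)"

text \<open>Omega_C(mu) = min { Omega(q) : q in Delta^Y, Y q = mu }  (+infinity outside conv Y).\<close>
definition OmegaC :: "vec set \<Rightarrow> (dvec \<Rightarrow> ereal) \<Rightarrow> vec \<Rightarrow> ereal" where
  "OmegaC Y \<Omega> \<mu> = (INF q\<in>{q \<in> prob_simplex Y. Ymat Y q = \<mu>}. \<Omega> q)"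

definition proper_convex_dom_simplex :: "vec set \<Rightarrow> (dvec \<Rightarrow> ereal) \<Rightarrow> bool" where
  "proper_convex_dom_simplex Y \<Omega> \<longleftrightarrow>
     prob_simplex Y \<noteq> {} \<and> (\<forall>q. \<Omega> q \<noteq> -\<infinity>) \<and> (\<forall>q. \<Omega> q < \<infinity> \<longleftrightarrow> q \<in> prob_simplex Y) \<and>
     (\<forall>q1\<in>prob_simplex Y. \<forall>q2\<in>prob_simplex Y. \<forall>a\<in>{0..1}.
        \<Omega> (\<lambda>v. a * q1 v + (1 - a) * q2 v) \<le> ereal a * \<Omega> q1 + ereal (1 - a) * \<Omega> q2)"

definition lsc_Y :: "vec set \<Rightarrow> (dvec \<Rightarrow> ereal) \<Rightarrow> bool" where
  "lsc_Y Y \<Omega> \<longleftrightarrow> (\<forall>q s. q \<in> RY Y \<longrightarrow> (\<forall>n. s n \<in> RY Y) \<longrightarrow>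
      (\<forall>y\<in>Y. (\<lambda>n. s n y) \<longlonglongrightarrow> q y) \<longrightarrow> \<Omega> q \<le> liminf (\<lambda>n. \<Omega> (s n)))"

text \<open>The restriction of Omega to the affine hull {q in R^Y. sum q = 1} of Delta^Y is of
  Legendre type: strictly convex on the (relative) interior of its domain, and essentially
  smooth there (relative interior nonempty, differentiable along the affine hull, and gradient
  norms blow up along sequences approaching the relative boundary).\<close>
definition legendre_aff_simplex :: "vec set \<Rightarrow> (dvec \<Rightarrow> ereal) \<Rightarrow> bool" where
  "legendre_aff_simplex Y \<Omega> \<longleftrightarrow>
     (\<forall>q1\<in>ri_simplex Y. \<forall>q2\<in>ri_simplex Y. q1 \<noteq> q2 \<longrightarrow> (\<forall>a\<in>{0<..<1}.
        \<Omega> (\<lambda>v. a * q1 v + (1 - a) * q2 v) < ereal a * \<Omega> q1 + ereal (1 - a) * \<Omega> q2)) \<and>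
     ri_simplex Y \<noteq> {} \<and>
     (\<forall>q\<in>ri_simplex Y. \<exists>g. has_grad_along Y (tangent Y) (\<lambda>p. real_of_ereal (\<Omega> p)) q g) \<and>
     (\<forall>s q g. (\<forall>n. s n \<in> ri_simplex Y) \<longrightarrow> q \<in> prob_simplex Y - ri_simplex Y \<longrightarrow>
        (\<forall>y\<in>Y. (\<lambda>n. s n y) \<longlonglongrightarrow> q y) \<longrightarrow>
        (\<forall>n. has_grad_along Y (tangent Y) (\<lambda>p. real_of_ereal (\<Omega> p)) (s n) (g n)) \<longrightarrow>
        filterlim (\<lambda>n. nrmY Y (g n)) at_top sequentially)"

definition no_convex_comb :: "vec set \<Rightarrow> bool" where
  "no_convex_comb Y \<longleftrightarrow> (\<forall>y\<in>Y. \<not> (\<exists>l. (\<forall>z\<in>Y - {y}. 0 \<le> l z) \<and> sum l (Y - {y}) = 1 \<and>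
      (\<forall>k. (\<Sum>z\<in>Y - {y}. l z * z k) = y k)))"

definition gam :: "('x \<Rightarrow> vec set) \<Rightarrow> ('x \<Rightarrow> vec \<Rightarrow> 'n \<Rightarrow> real) \<Rightarrow> 'x \<Rightarrow> 'n \<Rightarrow> dvec" where
  "gam Ys c x \<xi> = (\<lambda>y. if y \<in> Ys x then c x y \<xi> else 0)"

definition Sloss :: "vec set \<Rightarrow> (dvec \<Rightarrow> ereal) \<Rightarrow> real \<Rightarrow> dvec \<Rightarrow> dvec \<Rightarrow> dvec \<Rightarrow> ereal" where
  "Sloss Y \<Omega> \<kappa> \<gamma> s q = ereal (ipY Y \<gamma> q) + ereal \<kappa> * fyY Y \<Omega> s q"

definition SN :: "nat \<Rightarrow> ('x \<Rightarrow> vec set) \<Rightarrow> ('x \<Rightarrow> dvec \<Rightarrow> ereal) \<Rightarrow> real \<Rightarrow>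
    ('x \<Rightarrow> vec \<Rightarrow> 'n \<Rightarrow> real) \<Rightarrow> (nat \<Rightarrow> 'x) \<Rightarrow> (nat \<Rightarrow> 'n) \<Rightarrow> (nat \<Rightarrow> dvec) \<Rightarrow> (nat \<Rightarrow> dvec) \<Rightarrow> ereal" where
  "SN N Ys \<Omega> \<kappa> c x \<xi> s Q = ereal (1 / real N) *
     (\<Sum>i<N. Sloss (Ys (x i)) (\<Omega> (x i)) \<kappa> (gam Ys c (x i) (\<xi> i)) (s i) (Q i))"

definition scores :: "('x \<Rightarrow> nat) \<Rightarrow> ('x \<Rightarrow> vec set) \<Rightarrow> ('x \<Rightarrow> vec) \<Rightarrow> (nat \<Rightarrow> 'x) \<Rightarrow> nat \<Rightarrow> dvec" where
  "scores d Ys \<phi> x i = YmatT (d (x i)) (Ys (x i)) (\<phi> (x i))"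

definition prod_simplex :: "nat \<Rightarrow> ('x \<Rightarrow> vec set) \<Rightarrow> (nat \<Rightarrow> 'x) \<Rightarrow> (nat \<Rightarrow> dvec) set" where
  "prod_simplex N Ys x = {Q. \<forall>i<N. Q i \<in> prob_simplex (Ys (x i))}"

end

theory Submission imports Defs begin

lemma subseq_finite:
  fixes s :: "nat \<Rightarrow> vec \<Rightarrow> real"
  assumes "finite Y" "\<forall>n. \<forall>y\<in>Y. s n y \<in> {0..1}"
  shows "\<exists>r l. strict_mono r \<and> (\<forall>y\<in>Y. (\<lambda>n. s (r n) y) \<longlonglongrightarrow> l y)"
  using assms
proof (induction Y rule: finite_induct)
  case empty
  then show ?case by (auto intro: strict_mono_id)
next
  case (insert a Y)
  from insert.IH insert.prems obtain r l where r: "strict_mono r" and l: "\<forall>y\<in>Y. (\<lambda>n. s (r n) y) \<longlonglongrightarrow> l y" by blast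
  have "\<forall>n. (\<lambda>n. s (r n) a) n \<in> {0..1}" using insert.prems by auto
  then obtain la r' where r': "strict_mono r'" and la: "((\<lambda>n. s (r n) a) \<circ> r') \<longlonglongrightarrow> la"
    using compact_Icc compact_imp_seq_compact seq_compactE by metis
  have "strict_mono (r \<circ> r')" using r r' by (simp add: strict_mono_o)
  moreover have "\<forall>y\<in>insert a Y. (\<lambda>n. s ((r \<circ> r') n) y) \<longlonglongrightarrow> (l(a := la)) y"
  proof
    fix y assume "y \<in> insert a Y"
    then consider "y = a" | "y \<in> Y" "y \<noteq> a" by auto
    then show "(\<lambda>n. s ((r \<circ> r') n) y) \<longlonglongrightarrow> (l(a := la)) y"
    proof cases
      case 1 then show ?thesis using la by (simp add: comp_def)
    next
      case 2
      have "((\<lambda>n. s (r n) y) \<circ> r') \<longlonglongrightarrow> l y" using l 2 r' LIMSEQ_subseq_LIMSEQ by blast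
      then show ?thesis using 2 by (simp add: comp_def)
    qed
  qed
  ultimately show ?case by blast
qed

definition Fo :: "vec set \<Rightarrow> (dvec \<Rightarrow> ereal) \<Rightarrow> dvec \<Rightarrow> dvec \<Rightarrow> real" where
  "Fo Y \<Omega> \<theta> q = ipY Y \<theta> q - real_of_ereal (\<Omega> q)"

lemma ipY_tendsto:
  assumes "\<forall>y\<in>Y. (\<lambda>n. s n y) \<longlonglongrightarrow> l y"
  shows "(\<lambda>n. ipY Y \<theta> (s n)) \<longlonglongrightarrow> ipY Y \<theta> l"
  unfolding ipY_def using assms by (intro tendsto_sum tendsto_mult tendsto_const) auto

lemma simplex_le1:
  assumes "finite Y" "q \<in> prob_simplex Y" "y \<in> Y"
  shows "0 \<le> q y \<and> q y \<le> 1"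
proof -
  have "q y \<le> sum q Y" using assms by (intro member_le_sum) (auto simp: prob_simplex_def)
  then show ?thesis using assms by (auto simp: prob_simplex_def)
qed

lemma ipY_add: "ipY Y g (\<lambda>v. a v + b v) = ipY Y g a + ipY Y g b"
  unfolding ipY_def by (simp add: distrib_left sum.distrib)
lemma ipY_diff: "ipY Y g (\<lambda>v. a v - b v) = ipY Y g a - ipY Y g b"
  unfolding ipY_def by (simp add: right_diff_distrib sum_subtractf)
lemma ipY_scale: "ipY Y g (\<lambda>v. c * a v) = c * ipY Y g a"
  unfolding ipY_def by (simp add: sum_distrib_left mult.left_commute)
lemma ipY_div: "ipY Y g (\<lambda>v. a v / c) = ipY Y g a / c"
  unfolding ipY_def by (simp add: sum_divide_distrib)
lemma ipY_delta: "a \<in> Y \<Longrightarrow> finite Y \<Longrightarrow> ipY Y g (\<lambda>v. if v = a then 1 else 0) = g a"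
  unfolding ipY_def by (simp add: if_distrib cong: if_cong)
lemma ipY_comm: "ipY Y a b = ipY Y b a"
  unfolding ipY_def by (simp add: mult.commute)

lemma nrmY_scale: "nrmY Y (\<lambda>v. c * a v) = \<bar>c\<bar> * nrmY Y a"
proof -
  have "ipY Y (\<lambda>v. c * a v) (\<lambda>v. c * a v) = c^2 * ipY Y a a"
    unfolding ipY_def by (simp add: sum_distrib_left power2_eq_square algebra_simps)
  then show ?thesis unfolding nrmY_def by (simp add: real_sqrt_mult)
qed

lemma nrmY_L2: "nrmY Y a = L2_set a Y"
  unfolding nrmY_def ipY_def L2_set_def by (simp add: power2_eq_square)

lemma nrmY_nonneg: "0 \<le> nrmY Y a"
  by (simp add: nrmY_L2)

lemma ipY_CS: "\<bar>ipY Y a b\<bar> \<le> nrmY Y a * nrmY Y b"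
proof -
  have "\<bar>ipY Y a b\<bar> \<le> (\<Sum>y\<in>Y. \<bar>a y\<bar> * \<bar>b y\<bar>)"
    unfolding ipY_def by (metis (no_types, lifting) abs_mult sum_abs sum.cong)
  also have "\<dots> \<le> L2_set a Y * L2_set b Y" by (rule L2_set_mult_ineq)
  finally show ?thesis by (simp add: nrmY_L2)
qed

lemma eps_lemma:
  fixes a b D :: real
  assumes "\<forall>e>0. a \<le> b + e * D" "0 \<le> D"
  shows "a \<le> b"
proof (rule field_le_epsilon)
  fix e :: real assume e: "0 < e"
  have "e / (D + 1) > 0" using e assms(2) by simp
  then have "a \<le> b + (e / (D + 1)) * D" using assms(1) by blast
  also have "(e / (D + 1)) * D \<le> e" using e assms(2) by (simp add: field_simps)
  finally show "a \<le> b + e" by simp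
qed

lemma tangent_bound:
  fixes G :: dvec
  assumes fin: "finite Y" and G: "G \<in> tangent Y"
    and K: "\<forall>a\<in>Y. \<forall>b\<in>Y. G a - G b \<le> K a b"
  shows "nrmY Y G \<le> real (card Y) * (\<Sum>a\<in>Y. \<Sum>b\<in>Y. \<bar>K a b\<bar>)"
proof -
  define Kt where "Kt = (\<Sum>a\<in>Y. \<Sum>b\<in>Y. \<bar>K a b\<bar>)"
  have sG: "sum G Y = 0" using G by (simp add: tangent_def)
  have Kt0: "0 \<le> Kt" unfolding Kt_def by (intro sum_nonneg) auto
  have row: "(\<Sum>b\<in>Y. \<bar>K a b\<bar>) \<le> Kt" if "a \<in> Y" for a
    unfolding Kt_def using that fin by (intro member_le_sum) (auto intro: sum_nonneg)
  have bnd: "\<bar>G a\<bar> \<le> Kt" if a: "a \<in> Y" for a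
  proof -
    have cpos: "1 \<le> real (card Y)" using a fin by (metis One_nat_def Suc_leI card_gt_0_iff empty_iff of_nat_1 of_nat_mono)
    have "real (card Y) * G a = (\<Sum>b\<in>Y. G a - G b)" using sG by (simp add: sum_subtractf)
    also have "\<dots> \<le> (\<Sum>b\<in>Y. \<bar>K a b\<bar>)" using K a by (intro sum_mono) force
    also have "\<dots> \<le> Kt" using row a by blast
    finally have up: "real (card Y) * G a \<le> Kt" .
    have "- (real (card Y) * G a) = (\<Sum>b\<in>Y. G b - G a)" using sG by (simp add: sum_subtractf)
    also have "\<dots> \<le> (\<Sum>b\<in>Y. \<bar>K b a\<bar>)" using K a by (intro sum_mono) force
    also have "\<dots> \<le> (\<Sum>b\<in>Y. (\<Sum>c\<in>Y. \<bar>K b c\<bar>))"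
      using a fin by (intro sum_mono member_le_sum) auto
    finally have lo: "- (real (card Y) * G a) \<le> Kt" by (simp add: Kt_def)
    have "real (card Y) * \<bar>G a\<bar> \<le> Kt" using up lo by (simp add: abs_if)
    moreover have "\<bar>G a\<bar> \<le> real (card Y) * \<bar>G a\<bar>" using cpos by (simp add: mult_le_cancel_right1)
    ultimately show ?thesis by linarith
  qed
  have "nrmY Y G \<le> (\<Sum>a\<in>Y. \<bar>G a\<bar>)" by (simp add: nrmY_L2 L2_set_le_sum_abs)
  also have "\<dots> \<le> (\<Sum>a\<in>Y. Kt)" using bnd by (intro sum_mono) auto
  also have "\<dots> = real (card Y) * Kt" by simp
  finally show ?thesis by (simp add: Kt_def)
qed

lemma simplex_comb:
  assumes "q1 \<in> prob_simplex Y" "q2 \<in> prob_simplex Y" "0 \<le> a" "a \<le> 1"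
  shows "(\<lambda>v. a * q1 v + (1 - a) * q2 v) \<in> prob_simplex Y"
proof -
  have "sum (\<lambda>v. a * q1 v + (1 - a) * q2 v) Y = a * sum q1 Y + (1 - a) * sum q2 Y"
    by (simp add: sum.distrib sum_distrib_left)
  then show ?thesis using assms by (auto simp: prob_simplex_def RY_def)
qed

lemma ri_sub: "ri_simplex Y \<subseteq> prob_simplex Y" by (auto simp: ri_simplex_def)

definition zf :: "dvec \<Rightarrow> vec \<Rightarrow> vec \<Rightarrow> dvec" where
  "zf p a b = (\<lambda>v. p v + p b * ((if v = a then 1 else 0) - (if v = b then 1 else 0)))"

lemma zf_simplex:
  assumes fin: "finite Y" and p: "p \<in> prob_simplex Y" and ab: "a \<in> Y" "b \<in> Y" "a \<noteq> b"
  shows "zf p a b \<in> prob_simplex Y"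
proof -
  have pb: "0 \<le> p b" using p ab by (auto simp: prob_simplex_def)
  have "zf p a b \<in> RY Y" using p ab by (auto simp: zf_def RY_def prob_simplex_def)
  moreover have "\<forall>y\<in>Y. 0 \<le> zf p a b y"
  proof
    fix y assume y: "y \<in> Y"
    have "0 \<le> p y" using p y by (auto simp: prob_simplex_def)
    then show "0 \<le> zf p a b y" using pb ab by (auto simp: zf_def)
  qed
  moreover have "sum (zf p a b) Y = 1"
  proof -
    have "sum (zf p a b) Y = sum p Y + p b * ((\<Sum>v\<in>Y. if v = a then 1 else 0) - (\<Sum>v\<in>Y. if v = b then 1 else 0))"
      unfolding zf_def by (simp add: sum.distrib sum_distrib_left[symmetric] sum_subtractf)
    also have "\<dots> = 1" using p ab fin by (simp add: prob_simplex_def)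
    finally show ?thesis .
  qed
  ultimately show ?thesis by (simp add: prob_simplex_def)
qed

lemma comb_ri:
  assumes p: "p \<in> ri_simplex Y" and q0: "q0 \<in> prob_simplex Y" and l: "0 < l" "l \<le> 1"
  shows "(\<lambda>v. l * p v + (1 - l) * q0 v) \<in> ri_simplex Y"
proof -
  have ps: "p \<in> prob_simplex Y" using p by (auto simp: ri_simplex_def)
  have "(\<lambda>v. l * p v + (1 - l) * q0 v) \<in> prob_simplex Y" using simplex_comb[OF ps q0] l by auto
  moreover have "\<forall>y\<in>Y. 0 < l * p y + (1 - l) * q0 y"
  proof
    fix y assume y: "y \<in> Y"
    have "0 < p y" using p y by (auto simp: ri_simplex_def)
    moreover have "0 \<le> q0 y" using q0 y by (auto simp: prob_simplex_def)
    ultimately show "0 < l * p y + (1 - l) * q0 y" using l by (simp add: add_pos_nonneg)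
  qed
  ultimately show ?thesis by (simp add: ri_simplex_def)
qed

lemma ipY_add1: "ipY Y (\<lambda>v. a v + b v) g = ipY Y a g + ipY Y b g"
  unfolding ipY_def by (simp add: distrib_right sum.distrib)

lemma nrm_simplex_diff:
  assumes "finite Y" "q \<in> prob_simplex Y" "q' \<in> prob_simplex Y"
  shows "nrmY Y (\<lambda>v. q v - q' v) \<le> 2"
proof -
  have "nrmY Y (\<lambda>v. q v - q' v) \<le> (\<Sum>y\<in>Y. \<bar>q y - q' y\<bar>)" by (simp add: nrmY_L2 L2_set_le_sum_abs)
  also have "\<dots> \<le> (\<Sum>y\<in>Y. q y + q' y)"
  proof (rule sum_mono)
    fix y assume "y \<in> Y"
    then have "0 \<le> q y" "0 \<le> q' y" using assms by (auto simp: prob_simplex_def)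
    then show "\<bar>q y - q' y\<bar> \<le> q y + q' y" by linarith
  qed
  also have "\<dots> = 2" using assms by (simp add: sum.distrib prob_simplex_def)
  finally show ?thesis .
qed

lemma nrm_tendsto:
  assumes "\<forall>y\<in>Y. (\<lambda>n. s n y) \<longlonglongrightarrow> l y"
  shows "(\<lambda>n. nrmY Y (\<lambda>v. s n v - l v)) \<longlonglongrightarrow> 0"
proof -
  have "(\<lambda>n. sqrt (\<Sum>y\<in>Y. (s n y - l y) * (s n y - l y))) \<longlonglongrightarrow> sqrt (\<Sum>y\<in>Y. (l y - l y) * (l y - l y))"
    using assms by (intro tendsto_intros tendsto_sum) auto
  then show ?thesis by (simp add: nrmY_def ipY_def)
qed

lemma ipd_Ymat: "ipd d \<phi> (Ymat Y p) = ipY Y (YmatT d Y \<phi>) p"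
proof -
  have "ipd d \<phi> (Ymat Y p) = (\<Sum>k<d. \<Sum>y\<in>Y. \<phi> k * (p y * y k))"
    unfolding ipd_def Ymat_def by (simp add: sum_distrib_left)
  also have "\<dots> = (\<Sum>y\<in>Y. \<Sum>k<d. \<phi> k * (p y * y k))" by (rule sum.swap)
  also have "\<dots> = (\<Sum>y\<in>Y. (\<Sum>k<d. y k * \<phi> k) * p y)"
    by (simp add: sum_distrib_left sum_distrib_right mult_ac)
  also have "\<dots> = ipY Y (YmatT d Y \<phi>) p"
    unfolding ipY_def YmatT_def ipd_def by simp
  finally show ?thesis .
qed

lemma Ymat_Rd: "Y \<subseteq> Rd d \<Longrightarrow> Ymat Y p \<in> Rd d"
  unfolding Ymat_def Rd_def by (auto intro!: sum.neutral)

lemma ipY_theta: "ipY Y (\<lambda>y. s y - \<gamma> y / \<kappa>) p = ipY Y s p - ipY Y \<gamma> p / \<kappa>"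
  unfolding ipY_def by (simp add: left_diff_distrib sum_subtractf sum_divide_distrib)

context
  fixes Y :: "vec set" and \<Omega> :: "dvec \<Rightarrow> ereal"
  assumes fin: "finite Y" and pc: "proper_convex_dom_simplex Y \<Omega>"
    and lsc: "lsc_Y Y \<Omega>" and leg: "legendre_aff_simplex Y \<Omega>"
begin

lemma Om_simplex: "q \<in> prob_simplex Y \<Longrightarrow> \<Omega> q = ereal (real_of_ereal (\<Omega> q))"
proof -
  assume "q \<in> prob_simplex Y"
  then have "\<Omega> q < \<infinity>" "\<Omega> q \<noteq> -\<infinity>" using pc unfolding proper_convex_dom_simplex_def by blast+
  then show ?thesis by (cases "\<Omega> q") auto
qed

lemma Om_out: "q \<notin> prob_simplex Y \<Longrightarrow> \<Omega> q = \<infinity>"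
proof -
  assume "q \<notin> prob_simplex Y"
  then have "\<not> \<Omega> q < \<infinity>" using pc unfolding proper_convex_dom_simplex_def by blast
  then show ?thesis by (cases "\<Omega> q") auto
qed

lemma simplex_subseq:
  fixes s :: "nat \<Rightarrow> dvec"
  assumes "\<forall>n. s n \<in> prob_simplex Y"
  shows "\<exists>r l. strict_mono r \<and> l \<in> prob_simplex Y \<and> (\<forall>y\<in>Y. (\<lambda>n. s (r n) y) \<longlonglongrightarrow> l y)"
proof -
  have "\<forall>n. \<forall>y\<in>Y. s n y \<in> {0..1}" using assms simplex_le1[OF fin] by auto
  with subseq_finite[of Y s] fin obtain r l where r: "strict_mono r" and l: "\<forall>y\<in>Y. (\<lambda>n. s (r n) y) \<longlonglongrightarrow> l y"
    by blast
  define l' where "l' = (\<lambda>v. if v \<in> Y then l v else 0)"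
  have l': "\<forall>y\<in>Y. (\<lambda>n. s (r n) y) \<longlonglongrightarrow> l' y" using l by (simp add: l'_def)
  have "l' \<in> RY Y" by (simp add: RY_def l'_def)
  moreover have "\<forall>y\<in>Y. 0 \<le> l' y"
  proof
    fix y assume y: "y \<in> Y"
    show "0 \<le> l' y"
      by (rule LIMSEQ_le_const[OF l'[rule_format, OF y]]) (use assms y in \<open>auto simp: prob_simplex_def\<close>)
  qed
  moreover have "sum l' Y = 1"
  proof -
    have "(\<lambda>n. sum (s (r n)) Y) \<longlonglongrightarrow> sum l' Y" using l' by (intro tendsto_sum) auto
    moreover have "(\<lambda>n. sum (s (r n)) Y) = (\<lambda>n. 1)" using assms by (auto simp: prob_simplex_def)
    ultimately have "(\<lambda>n. 1::real) \<longlonglongrightarrow> sum l' Y" by simp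
    then show ?thesis by (simp add: LIMSEQ_const_iff)
  qed
  ultimately have "l' \<in> prob_simplex Y" by (simp add: prob_simplex_def)
  then show ?thesis using r l' by blast
qed

lemma lsc_bound:
  fixes s :: "nat \<Rightarrow> dvec"
  assumes s: "\<forall>n. s n \<in> prob_simplex Y" and l: "l \<in> prob_simplex Y"
    and conv: "\<forall>y\<in>Y. (\<lambda>n. s n y) \<longlonglongrightarrow> l y"
    and ev: "eventually (\<lambda>n. real_of_ereal (\<Omega> (s n)) \<le> K) sequentially"
  shows "real_of_ereal (\<Omega> l) \<le> K"
proof -
  have "\<Omega> l \<le> liminf (\<lambda>n. \<Omega> (s n))"
    using lsc l s conv unfolding lsc_Y_def prob_simplex_def by blast
  also have "\<dots> \<le> liminf (\<lambda>n. ereal K)"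
  proof (rule Liminf_mono)
    show "\<forall>\<^sub>F n in sequentially. \<Omega> (s n) \<le> ereal K"
      using ev proof eventually_elim
      case (elim n) then show ?case using Om_simplex[of "s n"] s by (metis ereal_less_eq(3))
    qed
  qed
  also have "\<dots> = ereal K" by (simp add: Liminf_const)
  finally have "ereal (real_of_ereal (\<Omega> l)) \<le> ereal K" using Om_simplex[OF l] by simp
  then show ?thesis by simp
qed

lemma lsc_F:
  fixes s :: "nat \<Rightarrow> dvec"
  assumes s: "\<forall>n. s n \<in> prob_simplex Y" and l: "l \<in> prob_simplex Y"
    and conv: "\<forall>y\<in>Y. (\<lambda>n. s n y) \<longlonglongrightarrow> l y"
    and a: "a \<longlonglongrightarrow> 0" and ge: "\<forall>n. M - a n \<le> Fo Y \<Omega> \<theta> (s n)"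
  shows "M \<le> Fo Y \<Omega> \<theta> l"
proof -
  have "real_of_ereal (\<Omega> l) \<le> (ipY Y \<theta> l - M) + e" if e: "e > 0" for e
  proof (rule lsc_bound[OF s l conv])
    have "(\<lambda>n. ipY Y \<theta> (s n) - M + a n) \<longlonglongrightarrow> ipY Y \<theta> l - M + 0"
      using ipY_tendsto[OF conv] a by (intro tendsto_intros) auto
    then have "eventually (\<lambda>n. ipY Y \<theta> (s n) - M + a n < ipY Y \<theta> l - M + e) sequentially"
      using e by (intro order_tendstoD) auto
    then show "eventually (\<lambda>n. real_of_ereal (\<Omega> (s n)) \<le> ipY Y \<theta> l - M + e) sequentially"
    proof eventually_elim
      case (elim n) then show ?case using ge[rule_format, of n] by (simp add: Fo_def)
    qed
  qed
  then have "real_of_ereal (\<Omega> l) \<le> ipY Y \<theta> l - M"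
    by (rule field_le_epsilon)
  then show ?thesis by (simp add: Fo_def)
qed


lemma simplex_ne: "prob_simplex Y \<noteq> {}"
  using pc unfolding proper_convex_dom_simplex_def by blast

lemma lower_bound: "\<exists>L. \<forall>q\<in>prob_simplex Y. L \<le> real_of_ereal (\<Omega> q)"
proof (rule ccontr)
  assume "\<not> ?thesis"
  then have "\<forall>n::nat. \<exists>q. q \<in> prob_simplex Y \<and> real_of_ereal (\<Omega> q) < - real n"
    by (metis not_le)
  from choice[OF this] obtain s where s0: "\<forall>n. s n \<in> prob_simplex Y \<and> real_of_ereal (\<Omega> (s n)) < - real n"
    by blast
  then have s: "\<And>n. s n \<in> prob_simplex Y" "\<And>n. real_of_ereal (\<Omega> (s n)) < - real n" by auto
  then obtain r l where r: "strict_mono r" and l: "l \<in> prob_simplex Y"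
    and conv: "\<forall>y\<in>Y. (\<lambda>n. s (r n) y) \<longlonglongrightarrow> l y"
    using simplex_subseq[of s] by blast
  have "real_of_ereal (\<Omega> l) \<le> K" for K
  proof (rule lsc_bound[of "\<lambda>n. s (r n)"])
    show "\<forall>n. s (r n) \<in> prob_simplex Y" using s by auto
    show "l \<in> prob_simplex Y" by fact
    show "\<forall>y\<in>Y. (\<lambda>n. s (r n) y) \<longlonglongrightarrow> l y" by fact
    show "\<forall>\<^sub>F n in sequentially. real_of_ereal (\<Omega> (s (r n))) \<le> K"
    proof (rule eventually_sequentiallyI[of "nat \<lceil>- K\<rceil>"])
      fix n assume n: "nat \<lceil>- K\<rceil> \<le> n"
      have "n \<le> r n" using r by (simp add: seq_suble)
      then have "- real (r n) \<le> K" using n by linarith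
      then show "real_of_ereal (\<Omega> (s (r n))) \<le> K" using s(2)[of "r n"] by linarith
    qed
  qed
  from this[of "real_of_ereal (\<Omega> l) - 1"] show False by simp
qed

lemma Fo_bound:
  assumes "q \<in> prob_simplex Y" "\<forall>p\<in>prob_simplex Y. L \<le> real_of_ereal (\<Omega> p)"
  shows "Fo Y \<Omega> \<theta> q \<le> (\<Sum>y\<in>Y. \<bar>\<theta> y\<bar>) - L"
proof -
  have "ipY Y \<theta> q \<le> (\<Sum>y\<in>Y. \<bar>\<theta> y\<bar>)"
    unfolding ipY_def
  proof (rule sum_mono)
    fix y assume "y \<in> Y"
    then have "0 \<le> q y" "q y \<le> 1" using simplex_le1[OF fin assms(1)] by auto
    have "\<theta> y * q y \<le> \<bar>\<theta> y\<bar> * q y" using \<open>0 \<le> q y\<close> by (intro mult_right_mono) auto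
    also have "\<dots> \<le> \<bar>\<theta> y\<bar>" using \<open>q y \<le> 1\<close> by (simp add: mult_left_le)
    finally show "\<theta> y * q y \<le> \<bar>\<theta> y\<bar>" .
  qed
  then show ?thesis using assms by (auto simp: Fo_def)
qed

lemma max_exists: "\<exists>q\<in>prob_simplex Y. \<forall>p\<in>prob_simplex Y. Fo Y \<Omega> \<theta> p \<le> Fo Y \<Omega> \<theta> q"
proof -
  obtain L where L: "\<forall>p\<in>prob_simplex Y. L \<le> real_of_ereal (\<Omega> p)" using lower_bound by blast
  define S where "S = Sup (Fo Y \<Omega> \<theta> ` prob_simplex Y)"
  have bdd: "bdd_above (Fo Y \<Omega> \<theta> ` prob_simplex Y)"
    using Fo_bound[OF _ L] by (intro bdd_aboveI) blast
  have ne: "Fo Y \<Omega> \<theta> ` prob_simplex Y \<noteq> {}" using simplex_ne by blast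
  have "\<forall>n::nat. \<exists>q. q \<in> prob_simplex Y \<and> S - inverse (real (Suc n)) < Fo Y \<Omega> \<theta> q"
  proof
    fix n :: nat
    have "S - inverse (real (Suc n)) < S" by simp
    then show "\<exists>q. q \<in> prob_simplex Y \<and> S - inverse (real (Suc n)) < Fo Y \<Omega> \<theta> q"
      unfolding S_def using less_cSup_iff[OF ne bdd] by blast
  qed
  from choice[OF this] obtain s where s0: "\<forall>n. s n \<in> prob_simplex Y \<and> S - inverse (real (Suc n)) < Fo Y \<Omega> \<theta> (s n)"
    by blast
  then have s: "\<And>n. s n \<in> prob_simplex Y" "\<And>n. S - inverse (real (Suc n)) < Fo Y \<Omega> \<theta> (s n)" by auto
  then obtain r l where r: "strict_mono r" and l: "l \<in> prob_simplex Y"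
    and conv: "\<forall>y\<in>Y. (\<lambda>n. s (r n) y) \<longlonglongrightarrow> l y"
    using simplex_subseq[of s] by blast
  have "S \<le> Fo Y \<Omega> \<theta> l"
  proof (rule lsc_F[of "\<lambda>n. s (r n)" l "\<lambda>n. inverse (real (Suc (r n)))"])
    show "\<forall>n. s (r n) \<in> prob_simplex Y" using s by auto
    show "l \<in> prob_simplex Y" by fact
    show "\<forall>y\<in>Y. (\<lambda>n. s (r n) y) \<longlonglongrightarrow> l y" by fact
    have "((\<lambda>n. inverse (real (Suc n))) \<circ> r) \<longlonglongrightarrow> 0"
      using LIMSEQ_subseq_LIMSEQ[OF LIMSEQ_inverse_real_of_nat r] .
    then show "(\<lambda>n. inverse (real (Suc (r n)))) \<longlonglongrightarrow> 0" by (simp add: comp_def)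
    show "\<forall>n. S - inverse (real (Suc (r n))) \<le> Fo Y \<Omega> \<theta> (s (r n))" using s(2) less_imp_le by blast
  qed
  moreover have "\<forall>p\<in>prob_simplex Y. Fo Y \<Omega> \<theta> p \<le> S"
    unfolding S_def using bdd by (auto intro: cSup_upper)
  ultimately show ?thesis using l by (meson order_trans)
qed

lemma simplex_RY: "prob_simplex Y \<subseteq> RY Y" by (auto simp: prob_simplex_def)

lemma conj_eq:
  assumes qs: "qs \<in> prob_simplex Y" and mx: "\<forall>p\<in>prob_simplex Y. Fo Y \<Omega> \<theta> p \<le> Fo Y \<Omega> \<theta> qs"
  shows "conjY Y \<Omega> \<theta> = ereal (Fo Y \<Omega> \<theta> qs)"
  unfolding conjY_def
proof (rule antisym)
  show "(SUP q\<in>RY Y. ereal (ipY Y \<theta> q) - \<Omega> q) \<le> ereal (Fo Y \<Omega> \<theta> qs)"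
  proof (rule SUP_least)
    fix q assume "q \<in> RY Y"
    show "ereal (ipY Y \<theta> q) - \<Omega> q \<le> ereal (Fo Y \<Omega> \<theta> qs)"
    proof (cases "q \<in> prob_simplex Y")
      case True
      obtain rr where "\<Omega> q = ereal rr" using Om_simplex[OF True] by blast
      then have "ereal (ipY Y \<theta> q) - \<Omega> q = ereal (Fo Y \<Omega> \<theta> q)"
        by (simp add: Fo_def)
      then show ?thesis using mx True by simp
    next
      case False
      then show ?thesis using Om_out[OF False] by simp
    qed
  qed
next
  obtain rr where "\<Omega> qs = ereal rr" using Om_simplex[OF qs] by blast
  then have eq: "ereal (ipY Y \<theta> qs) - \<Omega> qs = ereal (Fo Y \<Omega> \<theta> qs)"
    by (simp add: Fo_def)
  show "ereal (Fo Y \<Omega> \<theta> qs) \<le> (SUP q\<in>RY Y. ereal (ipY Y \<theta> q) - \<Omega> q)"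
    by (rule SUP_upper2[OF subsetD[OF simplex_RY qs]]) (simp add: eq)
qed


lemma conv_real:
  assumes "q1 \<in> prob_simplex Y" "q2 \<in> prob_simplex Y" "0 \<le> a" "a \<le> 1"
  shows "real_of_ereal (\<Omega> (\<lambda>v. a * q1 v + (1 - a) * q2 v))
     \<le> a * real_of_ereal (\<Omega> q1) + (1 - a) * real_of_ereal (\<Omega> q2)"
proof -
  have "\<Omega> (\<lambda>v. a * q1 v + (1 - a) * q2 v) \<le> ereal a * \<Omega> q1 + ereal (1 - a) * \<Omega> q2"
    using pc assms unfolding proper_convex_dom_simplex_def by auto
  moreover obtain r1 where "\<Omega> q1 = ereal r1" using Om_simplex[OF assms(1)] by blast
  moreover obtain r2 where "\<Omega> q2 = ereal r2" using Om_simplex[OF assms(2)] by blast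
  moreover obtain r3 where "\<Omega> (\<lambda>v. a * q1 v + (1 - a) * q2 v) = ereal r3"
    using Om_simplex[OF simplex_comb[OF assms]] by blast
  ultimately show ?thesis by simp
qed

lemma strict_real:
  assumes "q1 \<in> ri_simplex Y" "q2 \<in> ri_simplex Y" "q1 \<noteq> q2" "0 < a" "a < 1"
  shows "real_of_ereal (\<Omega> (\<lambda>v. a * q1 v + (1 - a) * q2 v))
     < a * real_of_ereal (\<Omega> q1) + (1 - a) * real_of_ereal (\<Omega> q2)"
proof -
  have s1: "q1 \<in> prob_simplex Y" and s2: "q2 \<in> prob_simplex Y" using assms ri_sub by auto
  have "\<Omega> (\<lambda>v. a * q1 v + (1 - a) * q2 v) < ereal a * \<Omega> q1 + ereal (1 - a) * \<Omega> q2"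
    using leg assms unfolding legendre_aff_simplex_def by auto
  moreover obtain r1 where "\<Omega> q1 = ereal r1" using Om_simplex[OF s1] by blast
  moreover obtain r2 where "\<Omega> q2 = ereal r2" using Om_simplex[OF s2] by blast
  moreover have "0 \<le> a" "a \<le> 1" using assms by auto
  moreover obtain r3 where "\<Omega> (\<lambda>v. a * q1 v + (1 - a) * q2 v) = ereal r3"
    using Om_simplex[OF simplex_comb[OF s1 s2 \<open>0 \<le> a\<close> \<open>a \<le> 1\<close>]] by blast
  ultimately show ?thesis by simp
qed

lemma grad_ineq:
  assumes q: "q \<in> ri_simplex Y" and G: "has_grad_along Y (tangent Y) (\<lambda>p. real_of_ereal (\<Omega> p)) q G"
    and z: "z \<in> prob_simplex Y"
  shows "ipY Y G (\<lambda>v. z v - q v) \<le> real_of_ereal (\<Omega> z) - real_of_ereal (\<Omega> q)"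
proof -
  define f where "f = (\<lambda>p. real_of_ereal (\<Omega> p))"
  define w where "w = (\<lambda>v. z v - q v)"
  define D where "D = nrmY Y w"
  have qs: "q \<in> prob_simplex Y" using q ri_sub by auto
  have D0: "0 \<le> D" by (simp add: D_def nrmY_nonneg)
  have "ipY Y G w \<le> f z - f q + e * D" if e: "e > 0" for e
  proof -
    obtain \<delta> where \<delta>: "\<delta> > 0" and H: "\<forall>h\<in>tangent Y. nrmY Y h < \<delta> \<longrightarrow>
        \<bar>f (\<lambda>v. q v + h v) - f q - ipY Y G h\<bar> \<le> e * nrmY Y h"
      using G e unfolding has_grad_along_def f_def by blast
    define t where "t = min 1 (\<delta> / (2 * (D + 1)))"
    have t0: "0 < t" and t1: "t \<le> 1" using \<delta> D0 by (auto simp: t_def)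
    have tD: "t * D < \<delta>"
    proof -
      have "t * D \<le> (\<delta> / (2 * (D + 1))) * D" using D0 by (intro mult_right_mono) (auto simp: t_def)
      also have "\<dots> = \<delta> * (D / (2 * (D + 1)))" by simp
      also have "\<dots> < \<delta> * 1"
      proof (rule mult_strict_left_mono)
        show "D / (2 * (D + 1)) < 1" using D0 by (simp add: divide_less_eq)
      qed (use \<delta> in auto)
      also have "\<dots> = \<delta>" by simp
      finally show ?thesis .
    qed
    define h where "h = (\<lambda>v. t * w v)"
    have hT: "h \<in> tangent Y"
    proof -
      have "z \<in> RY Y" "q \<in> RY Y" using z qs by (auto simp: prob_simplex_def)
      moreover have "sum z Y = 1" "sum q Y = 1" using z qs by (auto simp: prob_simplex_def)
      ultimately show ?thesis
        by (auto simp: tangent_def RY_def h_def w_def sum_distrib_left[symmetric] sum_subtractf)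
    qed
    have nh: "nrmY Y h = t * D" using t0 by (simp add: h_def D_def nrmY_scale)
    have ih: "ipY Y G h = t * ipY Y G w" by (simp add: h_def ipY_scale)
    have qh: "(\<lambda>v. q v + h v) = (\<lambda>v. t * z v + (1 - t) * q v)"
      by (auto simp: h_def w_def algebra_simps)
    have cv: "f (\<lambda>v. q v + h v) \<le> t * f z + (1 - t) * f q"
      unfolding qh f_def using conv_real[OF z qs] t0 t1 by simp
    have "\<bar>f (\<lambda>v. q v + h v) - f q - ipY Y G h\<bar> \<le> e * nrmY Y h"
      using H hT nh tD by auto
    then have "t * ipY Y G w \<le> t * (f z - f q) + t * (e * D)"
      using cv nh ih by (simp add: algebra_simps abs_le_iff)
    then have "t * ipY Y G w \<le> t * (f z - f q + e * D)" by (simp add: algebra_simps)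
    then show ?thesis using t0 by simp
  qed
  then have "ipY Y G w \<le> f z - f q" using eps_lemma D0 by blast
  then show ?thesis by (simp add: f_def w_def)
qed


lemma pair_bound:
  assumes q0: "q0 \<in> prob_simplex Y" and mx: "\<forall>p'\<in>prob_simplex Y. Fo Y \<Omega> \<theta> p' \<le> Fo Y \<Omega> \<theta> q0"
    and p: "p \<in> ri_simplex Y" and l: "0 < l" "l \<le> 1"
    and G: "has_grad_along Y (tangent Y) (\<lambda>p. real_of_ereal (\<Omega> p)) (\<lambda>v. l * p v + (1 - l) * q0 v) G"
    and ab: "a \<in> Y" "b \<in> Y" "a \<noteq> b"
  shows "G a - G b \<le> (real_of_ereal (\<Omega> (zf p a b)) - real_of_ereal (\<Omega> q0) - ipY Y \<theta> (\<lambda>v. p v - q0 v)) / p b"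
proof -
  define f where "f = (\<lambda>p. real_of_ereal (\<Omega> p))"
  define q where "q = (\<lambda>v. l * p v + (1 - l) * q0 v)"
  define c where "c = ipY Y \<theta> (\<lambda>v. p v - q0 v)"
  define Gp where "Gp = ipY Y G (\<lambda>v. p v - q0 v)"
  have ps: "p \<in> prob_simplex Y" using p ri_sub by auto
  have pb: "0 < p b" using p ab by (auto simp: ri_simplex_def)
  have qri: "q \<in> ri_simplex Y" unfolding q_def using comb_ri[OF p q0 l] .
  have G': "has_grad_along Y (tangent Y) f q G" using G by (simp add: f_def q_def)
  have i1: "ipY Y G (\<lambda>v. q0 v - q v) \<le> f q0 - f q"
    using grad_ineq[OF qri G[folded q_def] q0] by (simp add: f_def)
  have "(\<lambda>v. q0 v - q v) = (\<lambda>v. (- l) * (p v - q0 v))" by (auto simp: q_def algebra_simps)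
  then have "ipY Y G (\<lambda>v. q0 v - q v) = - l * Gp"
    using ipY_scale[of Y G "-l" "\<lambda>v. p v - q0 v"] by (simp add: Gp_def)
  with i1 have A: "f q - f q0 \<le> l * Gp" by simp
  have "Fo Y \<Omega> \<theta> q \<le> Fo Y \<Omega> \<theta> q0" using mx qri ri_sub by auto
  then have "ipY Y \<theta> q - ipY Y \<theta> q0 \<le> f q - f q0" by (simp add: Fo_def f_def)
  moreover have "ipY Y \<theta> q - ipY Y \<theta> q0 = l * c"
  proof -
    have "(\<lambda>v. q v - q0 v) = (\<lambda>v. l * (p v - q0 v))" by (auto simp: q_def algebra_simps)
    then have "ipY Y \<theta> (\<lambda>v. q v - q0 v) = l * c" by (simp add: ipY_scale c_def)
    then show ?thesis by (simp add: ipY_diff)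
  qed
  ultimately have B: "l * c \<le> f q - f q0" by simp
  from A B have "l * c \<le> l * Gp" by simp
  then have cG: "c \<le> Gp" using l by simp
  have zs: "zf p a b \<in> prob_simplex Y" using zf_simplex[OF fin ps ab] .
  have i3: "ipY Y G (\<lambda>v. zf p a b v - q v) \<le> f (zf p a b) - f q"
    using grad_ineq[OF qri G[folded q_def] zs] by (simp add: f_def)
  have "(\<lambda>v. zf p a b v - q v) = (\<lambda>v. (1 - l) * (p v - q0 v) + p b * ((if v = a then 1 else 0) - (if v = b then 1 else 0)))"
    by (auto simp: zf_def q_def algebra_simps)
  then have "ipY Y G (\<lambda>v. zf p a b v - q v) = (1 - l) * Gp + p b * (G a - G b)"
    using ab fin by (simp add: ipY_add ipY_scale ipY_diff ipY_delta Gp_def)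
  with i3 have C: "(1 - l) * Gp + p b * (G a - G b) \<le> f (zf p a b) - f q" by simp
  have "(1 - l) * c \<le> (1 - l) * Gp" using cG l by (intro mult_left_mono) auto
  with C B have "p b * (G a - G b) \<le> f (zf p a b) - f q0 - c" by (simp add: algebra_simps)
  then have "G a - G b \<le> (f (zf p a b) - f q0 - c) / p b" using pb by (simp add: pos_le_divide_eq mult.commute)
  then show ?thesis by (simp add: f_def c_def)
qed

lemma max_in_ri:
  assumes q0: "q0 \<in> prob_simplex Y" and mx: "\<forall>p'\<in>prob_simplex Y. Fo Y \<Omega> \<theta> p' \<le> Fo Y \<Omega> \<theta> q0"
  shows "q0 \<in> ri_simplex Y"
proof (rule ccontr)
  assume nri: "q0 \<notin> ri_simplex Y"
  have "ri_simplex Y \<noteq> {}" using leg unfolding legendre_aff_simplex_def by blast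
  then obtain p where p: "p \<in> ri_simplex Y" by blast
  define lam where "lam = (\<lambda>n::nat. inverse (real (Suc n)) / 2)"
  have lam0: "0 < lam n" "lam n \<le> 1" for n
    unfolding lam_def by (auto simp: field_simps)
  define s where "s = (\<lambda>n v. lam n * p v + (1 - lam n) * q0 v)"
  have sri: "\<forall>n. s n \<in> ri_simplex Y" unfolding s_def using comb_ri[OF p q0 lam0] by blast
  have laml: "lam \<longlonglongrightarrow> 0" unfolding lam_def
    using tendsto_divide[OF LIMSEQ_inverse_real_of_nat tendsto_const, of 2] by simp
  have conv: "\<forall>y\<in>Y. (\<lambda>n. s n y) \<longlonglongrightarrow> q0 y"
  proof
    fix y
    have "(\<lambda>n. lam n * p y + (1 - lam n) * q0 y) \<longlonglongrightarrow> 0 * p y + (1 - 0) * q0 y"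
      by (intro tendsto_intros laml)
    then show "(\<lambda>n. s n y) \<longlonglongrightarrow> q0 y" by (simp add: s_def)
  qed
  have "\<forall>n. \<exists>G. has_grad_along Y (tangent Y) (\<lambda>p. real_of_ereal (\<Omega> p)) (s n) G"
  proof
    fix n
    have "\<forall>q\<in>ri_simplex Y. \<exists>G. has_grad_along Y (tangent Y) (\<lambda>p. real_of_ereal (\<Omega> p)) q G"
      using leg unfolding legendre_aff_simplex_def by blast
    then show "\<exists>G. has_grad_along Y (tangent Y) (\<lambda>p. real_of_ereal (\<Omega> p)) (s n) G" using sri by blast
  qed
  from choice[OF this] obtain g where g: "\<forall>n. has_grad_along Y (tangent Y) (\<lambda>p. real_of_ereal (\<Omega> p)) (s n) (g n)"
    by blast
  have fl: "filterlim (\<lambda>n. nrmY Y (g n)) at_top sequentially"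
    using leg sri q0 nri conv g unfolding legendre_aff_simplex_def by blast
  define K where "K = (\<lambda>a b. if a = b then 0 else
     (real_of_ereal (\<Omega> (zf p a b)) - real_of_ereal (\<Omega> q0) - ipY Y \<theta> (\<lambda>v. p v - q0 v)) / p b)"
  define B where "B = real (card Y) * (\<Sum>a\<in>Y. \<Sum>b\<in>Y. \<bar>K a b\<bar>)"
  have bnd: "nrmY Y (g n) \<le> B" for n
    unfolding B_def
  proof (rule tangent_bound[OF fin])
    show "g n \<in> tangent Y" using g unfolding has_grad_along_def by blast
    show "\<forall>a\<in>Y. \<forall>b\<in>Y. g n a - g n b \<le> K a b"
    proof (intro ballI)
      fix a b assume ab: "a \<in> Y" "b \<in> Y"
      show "g n a - g n b \<le> K a b"
      proof (cases "a = b")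
        case True then show ?thesis by (simp add: K_def)
      next
        case False
        have "has_grad_along Y (tangent Y) (\<lambda>p. real_of_ereal (\<Omega> p)) (\<lambda>v. lam n * p v + (1 - lam n) * q0 v) (g n)"
          using g by (simp add: s_def)
        from pair_bound[OF q0 mx p lam0 this ab False] show ?thesis using False by (simp add: K_def)
      qed
    qed
  qed
  from fl have "eventually (\<lambda>n. B < nrmY Y (g n)) sequentially"
    by (simp add: filterlim_at_top_dense)
  then obtain n where "B < nrmY Y (g n)" using eventually_sequentially by auto
  with bnd[of n] show False by simp
qed

lemma max_unique:
  assumes q1: "q1 \<in> prob_simplex Y" and m1: "\<forall>p'\<in>prob_simplex Y. Fo Y \<Omega> \<theta> p' \<le> Fo Y \<Omega> \<theta> q1"
    and q2: "q2 \<in> prob_simplex Y" and m2: "\<forall>p'\<in>prob_simplex Y. Fo Y \<Omega> \<theta> p' \<le> Fo Y \<Omega> \<theta> q2"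
  shows "q1 = q2"
proof (rule ccontr)
  assume ne: "q1 \<noteq> q2"
  have r1: "q1 \<in> ri_simplex Y" using max_in_ri[OF q1 m1] .
  have r2: "q2 \<in> ri_simplex Y" using max_in_ri[OF q2 m2] .
  define m where "m = (\<lambda>v. (1/2) * q1 v + (1 - 1/2) * q2 v)"
  have ms: "m \<in> prob_simplex Y" unfolding m_def by (rule simplex_comb[OF q1 q2]) auto
  have st: "real_of_ereal (\<Omega> m) < (1/2) * real_of_ereal (\<Omega> q1) + (1 - 1/2) * real_of_ereal (\<Omega> q2)"
    unfolding m_def by (rule strict_real[OF r1 r2 ne]) auto
  have ipm: "ipY Y \<theta> m = (1/2) * ipY Y \<theta> q1 + (1 - 1/2) * ipY Y \<theta> q2"
    unfolding m_def by (simp add: ipY_add ipY_div)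
  have e12: "Fo Y \<Omega> \<theta> q1 = Fo Y \<Omega> \<theta> q2" using m1 m2 q1 q2 by (meson antisym)
  have "Fo Y \<Omega> \<theta> m > Fo Y \<Omega> \<theta> q1" using st ipm e12 by (simp add: Fo_def)
  moreover have "Fo Y \<Omega> \<theta> m \<le> Fo Y \<Omega> \<theta> q1" using m1 ms by blast
  ultimately show False by simp
qed


lemma Fo_shift: "Fo Y \<Omega> (\<lambda>v. \<theta> v + h v) q = Fo Y \<Omega> \<theta> q + ipY Y h q"
  by (simp add: Fo_def ipY_add1)

lemma conj_grad:
  assumes qs: "qs \<in> prob_simplex Y" and mx: "\<forall>p\<in>prob_simplex Y. Fo Y \<Omega> \<theta> p \<le> Fo Y \<Omega> \<theta> qs"
  shows "has_grad_along Y (RY Y) (\<lambda>\<theta>. real_of_ereal (conjY Y \<Omega> \<theta>)) \<theta> qs"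
proof -
  define cv where "cv = (\<lambda>\<theta>. real_of_ereal (conjY Y \<Omega> \<theta>))"
  have cv: "cv \<theta>' = Fo Y \<Omega> \<theta>' q" if "q \<in> prob_simplex Y" "\<forall>p\<in>prob_simplex Y. Fo Y \<Omega> \<theta>' p \<le> Fo Y \<Omega> \<theta>' q" for \<theta>' q
    using conj_eq[OF that] by (simp add: cv_def)
  have "\<forall>\<theta>'. \<exists>q. q \<in> prob_simplex Y \<and> (\<forall>p\<in>prob_simplex Y. Fo Y \<Omega> \<theta>' p \<le> Fo Y \<Omega> \<theta>' q)"
    using max_exists by blast
  from choice[OF this] obtain M where M: "\<And>\<theta>'. M \<theta>' \<in> prob_simplex Y"
     "\<And>\<theta>'. \<forall>p\<in>prob_simplex Y. Fo Y \<Omega> \<theta>' p \<le> Fo Y \<Omega> \<theta>' (M \<theta>')" by blast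
  have main: "\<exists>\<delta>>0. \<forall>h\<in>RY Y. nrmY Y h < \<delta> \<longrightarrow>
        \<bar>cv (\<lambda>v. \<theta> v + h v) - cv \<theta> - ipY Y qs h\<bar> \<le> e * nrmY Y h" if e: "e > 0" for e
  proof (rule ccontr)
    assume "\<not> ?thesis"
    then have "\<forall>n::nat. \<exists>h. h \<in> RY Y \<and> nrmY Y h < inverse (real (Suc n)) \<and>
        \<not> \<bar>cv (\<lambda>v. \<theta> v + h v) - cv \<theta> - ipY Y qs h\<bar> \<le> e * nrmY Y h"
      by (metis inverse_positive_iff_positive of_nat_0_less_iff zero_less_Suc)
    from choice[OF this] obtain h where h: "\<And>n. h n \<in> RY Y" "\<And>n. nrmY Y (h n) < inverse (real (Suc n))"
      "\<And>n. \<not> \<bar>cv (\<lambda>v. \<theta> v + h n v) - cv \<theta> - ipY Y qs (h n)\<bar> \<le> e * nrmY Y (h n)" by blast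
    define qn where "qn = (\<lambda>n. M (\<lambda>v. \<theta> v + h n v))"
    have qn: "\<And>n. qn n \<in> prob_simplex Y" using M by (simp add: qn_def)
    have key: "e < nrmY Y (\<lambda>v. qn n v - qs v) \<and>
        Fo Y \<Omega> \<theta> qs - 2 * inverse (real (Suc n)) \<le> Fo Y \<Omega> \<theta> (qn n)" for n
    proof -
      let ?t = "\<lambda>v. \<theta> v + h n v"
      have c1: "cv ?t = Fo Y \<Omega> \<theta> (qn n) + ipY Y (h n) (qn n)"
        using cv[OF M(1) M(2), of ?t] by (simp add: qn_def Fo_shift)
      have c0: "cv \<theta> = Fo Y \<Omega> \<theta> qs" using cv[OF qs mx] .
      have "Fo Y \<Omega> ?t qs \<le> Fo Y \<Omega> ?t (qn n)" using M(2)[of ?t] qs by (simp add: qn_def)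
      then have D0: "Fo Y \<Omega> \<theta> qs + ipY Y (h n) qs \<le> Fo Y \<Omega> \<theta> (qn n) + ipY Y (h n) (qn n)"
        by (simp add: Fo_shift)
      have hq: "ipY Y qs (h n) = ipY Y (h n) qs" by (rule ipY_comm)
      have Dgt: "e * nrmY Y (h n) < Fo Y \<Omega> \<theta> (qn n) - Fo Y \<Omega> \<theta> qs + ipY Y (h n) (qn n) - ipY Y (h n) qs"
        using h(3)[of n] c1 c0 D0 hq by (simp add: abs_if split: if_splits)
      have Fle: "Fo Y \<Omega> \<theta> (qn n) \<le> Fo Y \<Omega> \<theta> qs" using mx qn by blast
      have dif: "ipY Y (h n) (qn n) - ipY Y (h n) qs = ipY Y (h n) (\<lambda>v. qn n v - qs v)"
        by (simp add: ipY_diff)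
      have CS: "ipY Y (h n) (\<lambda>v. qn n v - qs v) \<le> nrmY Y (h n) * nrmY Y (\<lambda>v. qn n v - qs v)"
        using ipY_CS[of Y "h n" "\<lambda>v. qn n v - qs v"] by simp
      have b2: "nrmY Y (\<lambda>v. qn n v - qs v) \<le> 2" using nrm_simplex_diff[OF fin qn qs] .
      have nh0: "0 \<le> nrmY Y (h n)" by (rule nrmY_nonneg)
      have "e * nrmY Y (h n) < nrmY Y (h n) * nrmY Y (\<lambda>v. qn n v - qs v)"
        using Dgt Fle dif CS by linarith
      then have g1: "e < nrmY Y (\<lambda>v. qn n v - qs v)" using nh0
        by (metis mult.commute mult_right_less_imp_less)
      have "nrmY Y (h n) * nrmY Y (\<lambda>v. qn n v - qs v) \<le> nrmY Y (h n) * 2"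
        using b2 nh0 by (intro mult_left_mono) auto
      then have "Fo Y \<Omega> \<theta> qs - 2 * nrmY Y (h n) \<le> Fo Y \<Omega> \<theta> (qn n)"
        using Dgt dif CS e nh0 by (smt (verit) mult_nonneg_nonneg)
      moreover have "2 * nrmY Y (h n) \<le> 2 * inverse (real (Suc n))" using h(2)[of n] by simp
      ultimately show ?thesis using g1 by linarith
    qed
    obtain r l where r: "strict_mono r" and l: "l \<in> prob_simplex Y"
      and conv: "\<forall>y\<in>Y. (\<lambda>n. qn (r n) y) \<longlonglongrightarrow> l y"
      using simplex_subseq[of qn] qn by blast
    have "Fo Y \<Omega> \<theta> qs \<le> Fo Y \<Omega> \<theta> l"
    proof (rule lsc_F[of "\<lambda>n. qn (r n)" l "\<lambda>n. 2 * inverse (real (Suc (r n)))"])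
      show "\<forall>n. qn (r n) \<in> prob_simplex Y" using qn by auto
      show "l \<in> prob_simplex Y" by fact
      show "\<forall>y\<in>Y. (\<lambda>n. qn (r n) y) \<longlonglongrightarrow> l y" by fact
      have "((\<lambda>n. inverse (real (Suc n))) \<circ> r) \<longlonglongrightarrow> 0"
        using LIMSEQ_subseq_LIMSEQ[OF LIMSEQ_inverse_real_of_nat r] .
      then have "(\<lambda>n. inverse (real (Suc (r n)))) \<longlonglongrightarrow> 0" by (simp add: comp_def)
      then show "(\<lambda>n. 2 * inverse (real (Suc (r n)))) \<longlonglongrightarrow> 0"
        using tendsto_mult[OF tendsto_const] by fastforce
      show "\<forall>n. Fo Y \<Omega> \<theta> qs - 2 * inverse (real (Suc (r n))) \<le> Fo Y \<Omega> \<theta> (qn (r n))"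
        using key by blast
    qed
    then have "\<forall>p\<in>prob_simplex Y. Fo Y \<Omega> \<theta> p \<le> Fo Y \<Omega> \<theta> l" using mx by (meson order_trans)
    then have lq: "l = qs" using max_unique[OF l _ qs mx] by blast
    have "(\<lambda>n. nrmY Y (\<lambda>v. qn (r n) v - qs v)) \<longlonglongrightarrow> 0"
      using nrm_tendsto[of Y "\<lambda>n. qn (r n)" qs] conv lq by simp
    then have "eventually (\<lambda>n. nrmY Y (\<lambda>v. qn (r n) v - qs v) < e) sequentially"
      using e by (intro order_tendstoD) auto
    then obtain n where "nrmY Y (\<lambda>v. qn (r n) v - qs v) < e" using eventually_sequentially by auto
    with key[of "r n"] show False by simp
  qed
  have "qs \<in> RY Y" using qs by (simp add: prob_simplex_def)
  then show ?thesis using main unfolding has_grad_along_def cv_def by blast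
qed


lemma conj_fin: "conjY Y \<Omega> \<theta> = ereal (real_of_ereal (conjY Y \<Omega> \<theta>))"
proof -
  obtain q where "q \<in> prob_simplex Y" "\<forall>p\<in>prob_simplex Y. Fo Y \<Omega> \<theta> p \<le> Fo Y \<Omega> \<theta> q"
    using max_exists by blast
  from conj_eq[OF this] show ?thesis by simp
qed

lemma Sloss_real:
  assumes p: "p \<in> prob_simplex Y"
  shows "Sloss Y \<Omega> \<kappa> \<gamma> s p = ereal (ipY Y \<gamma> p + \<kappa> * (real_of_ereal (\<Omega> p)
            + real_of_ereal (conjY Y \<Omega> s) - ipY Y s p))"
proof -
  obtain r where r: "\<Omega> p = ereal r" using Om_simplex[OF p] by blast
  obtain C where C: "conjY Y \<Omega> s = ereal C" using conj_fin by blast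
  show ?thesis unfolding Sloss_def fyY_def using r C by simp
qed

lemma Sloss_eq:
  assumes p: "p \<in> prob_simplex Y" and k: "\<kappa> > 0"
  shows "Sloss Y \<Omega> \<kappa> \<gamma> s p = ereal (\<kappa> * real_of_ereal (conjY Y \<Omega> s) - \<kappa> * Fo Y \<Omega> (\<lambda>y. s y - \<gamma> y / \<kappa>) p)"
  unfolding Sloss_real[OF p] using k by (simp add: Fo_def ipY_theta algebra_simps)

lemma argmin_i:
  assumes k: "\<kappa> > 0" and qi: "qi \<in> prob_simplex Y"
    and mn: "\<forall>p'\<in>prob_simplex Y. Sloss Y \<Omega> \<kappa> \<gamma> s qi \<le> Sloss Y \<Omega> \<kappa> \<gamma> s p'"
  shows "{p \<in> prob_simplex Y. \<forall>p'\<in>prob_simplex Y. Sloss Y \<Omega> \<kappa> \<gamma> s p \<le> Sloss Y \<Omega> \<kappa> \<gamma> s p'} = {qi}"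
    and "has_grad_along Y (RY Y) (\<lambda>\<theta>. real_of_ereal (conjY Y \<Omega> \<theta>)) (\<lambda>y. s y - \<gamma> y / \<kappa>) qi"
proof -
  define \<theta> where "\<theta> = (\<lambda>y. s y - \<gamma> y / \<kappa>)"
  have iff: "Sloss Y \<Omega> \<kappa> \<gamma> s p \<le> Sloss Y \<Omega> \<kappa> \<gamma> s p' \<longleftrightarrow> Fo Y \<Omega> \<theta> p' \<le> Fo Y \<Omega> \<theta> p"
    if "p \<in> prob_simplex Y" "p' \<in> prob_simplex Y" for p p'
    unfolding Sloss_eq[OF that(1) k] Sloss_eq[OF that(2) k] \<theta>_def using k by simp
  have mx: "\<forall>p\<in>prob_simplex Y. Fo Y \<Omega> \<theta> p \<le> Fo Y \<Omega> \<theta> qi" using mn iff qi by blast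
  show "{p \<in> prob_simplex Y. \<forall>p'\<in>prob_simplex Y. Sloss Y \<Omega> \<kappa> \<gamma> s p \<le> Sloss Y \<Omega> \<kappa> \<gamma> s p'} = {qi}"
  proof (intro equalityI subsetI)
    fix p assume "p \<in> {p \<in> prob_simplex Y. \<forall>p'\<in>prob_simplex Y. Sloss Y \<Omega> \<kappa> \<gamma> s p \<le> Sloss Y \<Omega> \<kappa> \<gamma> s p'}"
    then have p: "p \<in> prob_simplex Y" and "\<forall>p'\<in>prob_simplex Y. Fo Y \<Omega> \<theta> p' \<le> Fo Y \<Omega> \<theta> p" using iff by auto
    then have "p = qi" using max_unique[OF p _ qi mx] by blast
    then show "p \<in> {qi}" by simp
  next
    fix p assume "p \<in> {qi}"
    then show "p \<in> {p \<in> prob_simplex Y. \<forall>p'\<in>prob_simplex Y. Sloss Y \<Omega> \<kappa> \<gamma> s p \<le> Sloss Y \<Omega> \<kappa> \<gamma> s p'}"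
      using qi mn by simp
  qed
  show "has_grad_along Y (RY Y) (\<lambda>\<theta>. real_of_ereal (conjY Y \<Omega> \<theta>)) (\<lambda>y. s y - \<gamma> y / \<kappa>) qi"
    using conj_grad[OF qi mx] by (simp add: \<theta>_def)
qed

lemma OC_lower:
  assumes qm: "qm \<in> prob_simplex Y"
    and mx: "\<forall>p\<in>prob_simplex Y. Fo Y \<Omega> (YmatT d Y \<phi>) p \<le> Fo Y \<Omega> (YmatT d Y \<phi>) qm"
  shows "ereal (ipd d \<phi> \<mu> - Fo Y \<Omega> (YmatT d Y \<phi>) qm) \<le> OmegaC Y \<Omega> \<mu>"
  unfolding OmegaC_def
proof (rule INF_greatest)
  fix q assume "q \<in> {q \<in> prob_simplex Y. Ymat Y q = \<mu>}"
  then have q: "q \<in> prob_simplex Y" and qm': "Ymat Y q = \<mu>" by auto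
  have "Fo Y \<Omega> (YmatT d Y \<phi>) q \<le> Fo Y \<Omega> (YmatT d Y \<phi>) qm" using mx q by blast
  then have "ipd d \<phi> \<mu> - Fo Y \<Omega> (YmatT d Y \<phi>) qm \<le> real_of_ereal (\<Omega> q)"
    using qm' ipd_Ymat[of d \<phi> Y q] by (simp add: Fo_def)
  then show "ereal (ipd d \<phi> \<mu> - Fo Y \<Omega> (YmatT d Y \<phi>) qm) \<le> \<Omega> q"
    using Om_simplex[OF q] by (metis ereal_less_eq(3))
qed

lemma conjd_OC:
  assumes Yd: "Y \<subseteq> Rd d"
  shows "conjd d (OmegaC Y \<Omega>) \<phi> = conjY Y \<Omega> (YmatT d Y \<phi>)"
proof -
  obtain qm where qm: "qm \<in> prob_simplex Y"
    and mx: "\<forall>p\<in>prob_simplex Y. Fo Y \<Omega> (YmatT d Y \<phi>) p \<le> Fo Y \<Omega> (YmatT d Y \<phi>) qm"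
    using max_exists by blast
  define Sm where "Sm = Fo Y \<Omega> (YmatT d Y \<phi>) qm"
  have cj: "conjY Y \<Omega> (YmatT d Y \<phi>) = ereal Sm" using conj_eq[OF qm mx] by (simp add: Sm_def)
  have low: "ereal (ipd d \<phi> \<mu> - Sm) \<le> OmegaC Y \<Omega> \<mu>" for \<mu>
    using OC_lower[OF qm mx] by (simp add: Sm_def)
  have "conjd d (OmegaC Y \<Omega>) \<phi> = ereal Sm"
    unfolding conjd_def
  proof (rule antisym)
    show "(SUP \<mu>\<in>Rd d. ereal (ipd d \<phi> \<mu>) - OmegaC Y \<Omega> \<mu>) \<le> ereal Sm"
    proof (rule SUP_least)
      fix \<mu> assume "\<mu> \<in> Rd d"
      have l: "ereal (ipd d \<phi> \<mu> - Sm) \<le> OmegaC Y \<Omega> \<mu>" by (rule low)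
      show "ereal (ipd d \<phi> \<mu>) - OmegaC Y \<Omega> \<mu> \<le> ereal Sm"
      proof (cases "OmegaC Y \<Omega> \<mu>")
        case (real r) then show ?thesis using l by simp
      next
        case PInf then show ?thesis by simp
      next
        case MInf then show ?thesis using l by simp
      qed
    qed
  next
    define \<mu> where "\<mu> = Ymat Y qm"
    have \<mu>: "\<mu> \<in> Rd d" unfolding \<mu>_def using Ymat_Rd[OF Yd] .
    have up: "OmegaC Y \<Omega> \<mu> \<le> \<Omega> qm" unfolding OmegaC_def \<mu>_def by (rule INF_lower) (use qm in auto)
    have l: "ereal (ipd d \<phi> \<mu> - Sm) \<le> OmegaC Y \<Omega> \<mu>" by (rule low)
    have ip: "ipd d \<phi> \<mu> = ipY Y (YmatT d Y \<phi>) qm" unfolding \<mu>_def by (rule ipd_Ymat)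
    have "ereal Sm \<le> ereal (ipd d \<phi> \<mu>) - OmegaC Y \<Omega> \<mu>"
    proof (cases "OmegaC Y \<Omega> \<mu>")
      case (real r)
      have "r \<le> real_of_ereal (\<Omega> qm)" using up real Om_simplex[OF qm] by (metis ereal_less_eq(3))
      then show ?thesis using real ip by (simp add: Sm_def Fo_def)
    next
      case PInf then show ?thesis using up Om_simplex[OF qm] by (metis PInfty_neq_ereal(1) ereal_infty_less_eq(1))
    next
      case MInf then show ?thesis using l by simp
    qed
    then show "ereal Sm \<le> (SUP \<mu>\<in>Rd d. ereal (ipd d \<phi> \<mu>) - OmegaC Y \<Omega> \<mu>)"
      using \<mu> by (rule SUP_upper2[rotated])
  qed
  then show ?thesis using cj by simp
qed

lemma OC_fin:
  assumes p: "p \<in> prob_simplex Y"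
  shows "OmegaC Y \<Omega> (Ymat Y p) = ereal (real_of_ereal (OmegaC Y \<Omega> (Ymat Y p)))"
proof -
  obtain qm where qm: "qm \<in> prob_simplex Y"
    and mx: "\<forall>p\<in>prob_simplex Y. Fo Y \<Omega> (YmatT 0 Y (\<lambda>_. 0)) p \<le> Fo Y \<Omega> (YmatT 0 Y (\<lambda>_. 0)) qm"
    using max_exists by blast
  have l: "ereal (ipd 0 (\<lambda>_. 0) (Ymat Y p) - Fo Y \<Omega> (YmatT 0 Y (\<lambda>_. 0)) qm) \<le> OmegaC Y \<Omega> (Ymat Y p)"
    by (rule OC_lower[OF qm mx])
  have up: "OmegaC Y \<Omega> (Ymat Y p) \<le> \<Omega> p" unfolding OmegaC_def by (rule INF_lower) (use p in auto)
  show ?thesis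
  proof (cases "OmegaC Y \<Omega> (Ymat Y p)")
    case PInf then show ?thesis using up Om_simplex[OF p] by (metis PInfty_neq_ereal(1) ereal_infty_less_eq(1))
  next
    case MInf then show ?thesis using l by simp
  qed simp
qed

lemma fyd_real:
  assumes Yd: "Y \<subseteq> Rd d" and p: "p \<in> prob_simplex Y"
  shows "fyd d (OmegaC Y \<Omega>) \<phi> (Ymat Y p) = ereal (real_of_ereal (OmegaC Y \<Omega> (Ymat Y p))
      + real_of_ereal (conjY Y \<Omega> (YmatT d Y \<phi>)) - ipY Y (YmatT d Y \<phi>) p)"
proof -
  obtain oc where oc: "OmegaC Y \<Omega> (Ymat Y p) = ereal oc" using OC_fin[OF p] by blast
  obtain C where C: "conjY Y \<Omega> (YmatT d Y \<phi>) = ereal C" using conj_fin by blast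
  show ?thesis unfolding fyd_def conjd_OC[OF Yd] ipd_Ymat using oc C by simp
qed


end

lemma SN_real:
  assumes "\<forall>j<N. \<exists>r. Sloss (Ys (x j)) (\<Omega> (x j)) \<kappa> (gam Ys c (x j) (\<xi> j)) (S j) (Q j) = ereal r"
  shows "SN N Ys \<Omega> \<kappa> c x \<xi> S Q = ereal (1 / real N *
     (\<Sum>j<N. real_of_ereal (Sloss (Ys (x j)) (\<Omega> (x j)) \<kappa> (gam Ys c (x j) (\<xi> j)) (S j) (Q j))))"
proof -
  have "(\<Sum>j<N. Sloss (Ys (x j)) (\<Omega> (x j)) \<kappa> (gam Ys c (x j) (\<xi> j)) (S j) (Q j))
      = (\<Sum>j<N. ereal (real_of_ereal (Sloss (Ys (x j)) (\<Omega> (x j)) \<kappa> (gam Ys c (x j) (\<xi> j)) (S j) (Q j))))"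
    using assms by (intro sum.cong refl) auto
  also have "\<dots> = ereal (\<Sum>j<N. real_of_ereal (Sloss (Ys (x j)) (\<Omega> (x j)) \<kappa> (gam Ys c (x j) (\<xi> j)) (S j) (Q j)))"
    by (rule sum_ereal)
  finally show ?thesis unfolding SN_def by simp
qed

lemma sum_sep:
  fixes u :: "nat \<Rightarrow> real"
  assumes "i < N" "(\<Sum>j<N. u j) \<le> (\<Sum>j<N. if j = i then w else u j)"
  shows "u i \<le> w"
proof -
  have "(\<Sum>j<N. u j) = u i + (\<Sum>j\<in>{..<N} - {i}. u j)" using assms(1) by (simp add: sum.remove)
  moreover have "(\<Sum>j<N. if j = i then w else u j) = w + (\<Sum>j\<in>{..<N} - {i}. u j)"
    using assms(1) by (simp add: sum.remove)
  ultimately show ?thesis using assms(2) by simp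
qed

theorem proposition1:
  fixes x :: "nat \<Rightarrow> 'x" and \<xi> :: "nat \<Rightarrow> 'n" and N :: nat
    and d :: "'x \<Rightarrow> nat" and Ys :: "'x \<Rightarrow> vec set"
    and c :: "'x \<Rightarrow> vec \<Rightarrow> 'n \<Rightarrow> real" and \<Omega> :: "'x \<Rightarrow> dvec \<Rightarrow> ereal"
    and \<phi> :: "'w \<Rightarrow> 'x \<Rightarrow> vec" and W :: "'w set" and \<kappa> :: real
    and wbar :: "nat \<Rightarrow> 'w" and q :: "nat \<Rightarrow> nat \<Rightarrow> dvec"
  assumes N: "0 < N"
    and kappa: "0 < \<kappa>"
    and Yfin: "\<forall>i<N. finite (Ys (x i))"
    and Yd: "\<forall>i<N. Ys (x i) \<subseteq> Rd (d (x i))"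
    and Yext: "\<forall>i<N. no_convex_comb (Ys (x i))"
    and Om: "\<forall>i<N. proper_convex_dom_simplex (Ys (x i)) (\<Omega> (x i)) \<and> lsc_Y (Ys (x i)) (\<Omega> (x i))
                     \<and> legendre_aff_simplex (Ys (x i)) (\<Omega> (x i))"
    and phi: "\<forall>w\<in>W. \<forall>i<N. \<phi> w (x i) \<in> Rd (d (x i))"
    and qstep: "\<forall>t. q (Suc t) \<in> prod_simplex N Ys x \<and>
       (\<forall>Q\<in>prod_simplex N Ys x.
          SN N Ys \<Omega> \<kappa> c x \<xi> (scores d Ys (\<phi> (wbar t)) x) (q (Suc t))
            \<le> SN N Ys \<Omega> \<kappa> c x \<xi> (scores d Ys (\<phi> (wbar t)) x) Q)"
    and wstep: "\<forall>t. wbar (Suc t) \<in> W \<and>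
       (\<forall>w\<in>W. SN N Ys \<Omega> \<kappa> c x \<xi> (scores d Ys (\<phi> (wbar (Suc t))) x) (q (Suc t))
                \<le> SN N Ys \<Omega> \<kappa> c x \<xi> (scores d Ys (\<phi> w) x) (q (Suc t)))"
  shows "\<forall>t.
    (\<forall>i<N.
       {p \<in> prob_simplex (Ys (x i)). \<forall>p'\<in>prob_simplex (Ys (x i)).
          Sloss (Ys (x i)) (\<Omega> (x i)) \<kappa> (gam Ys c (x i) (\<xi> i)) (scores d Ys (\<phi> (wbar t)) x i) p
          \<le> Sloss (Ys (x i)) (\<Omega> (x i)) \<kappa> (gam Ys c (x i) (\<xi> i)) (scores d Ys (\<phi> (wbar t)) x i) p'}
         = {q (Suc t) i}
     \<and> has_grad_along (Ys (x i)) (RY (Ys (x i))) (\<lambda>\<theta>. real_of_ereal (conjY (Ys (x i)) (\<Omega> (x i)) \<theta>))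
          (\<lambda>y. scores d Ys (\<phi> (wbar t)) x i y - gam Ys c (x i) (\<xi> i) y / \<kappa>) (q (Suc t) i)
     \<and> Ymat (Ys (x i)) (q (Suc t) i) = (\<lambda>k. \<Sum>y\<in>Ys (x i). q (Suc t) i y * y k))
    \<and> {w \<in> W. \<forall>w'\<in>W. SN N Ys \<Omega> \<kappa> c x \<xi> (scores d Ys (\<phi> w) x) (q (Suc t))
                       \<le> SN N Ys \<Omega> \<kappa> c x \<xi> (scores d Ys (\<phi> w') x) (q (Suc t))}
      = {w \<in> W. \<forall>w'\<in>W.
           ereal (1 / real N) * (\<Sum>i<N. fyd (d (x i)) (OmegaC (Ys (x i)) (\<Omega> (x i))) (\<phi> w (x i)) (Ymat (Ys (x i)) (q (Suc t) i)))
           \<le> ereal (1 / real N) * (\<Sum>i<N. fyd (d (x i)) (OmegaC (Ys (x i)) (\<Omega> (x i))) (\<phi> w' (x i)) (Ymat (Ys (x i)) (q (Suc t) i)))}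
    \<and> wbar (Suc t) \<in> {w \<in> W. \<forall>w'\<in>W.
           ereal (1 / real N) * (\<Sum>i<N. fyd (d (x i)) (OmegaC (Ys (x i)) (\<Omega> (x i))) (\<phi> w (x i)) (Ymat (Ys (x i)) (q (Suc t) i)))
           \<le> ereal (1 / real N) * (\<Sum>i<N. fyd (d (x i)) (OmegaC (Ys (x i)) (\<Omega> (x i))) (\<phi> w' (x i)) (Ymat (Ys (x i)) (q (Suc t) i)))}"
proof (intro allI)
  fix t
  have good: "finite (Ys (x i)) \<and> proper_convex_dom_simplex (Ys (x i)) (\<Omega> (x i)) \<and> lsc_Y (Ys (x i)) (\<Omega> (x i))
      \<and> legendre_aff_simplex (Ys (x i)) (\<Omega> (x i))" if "i < N" for i
    using Yfin Om that by blast
  define q' where "q' = q (Suc t)"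
  define s where "s = scores d Ys (\<phi> (wbar t)) x"
  have q'S: "q' \<in> prod_simplex N Ys x" using qstep by (simp add: q'_def)
  have q's: "q' i \<in> prob_simplex (Ys (x i))" if "i < N" for i using q'S that by (simp add: prod_simplex_def)
  have qmin: "\<forall>Q\<in>prod_simplex N Ys x. SN N Ys \<Omega> \<kappa> c x \<xi> s q' \<le> SN N Ys \<Omega> \<kappa> c x \<xi> s Q"
    using qstep by (simp add: q'_def s_def)
  define V where "V = (\<lambda>j P. real_of_ereal (Sloss (Ys (x j)) (\<Omega> (x j)) \<kappa> (gam Ys c (x j) (\<xi> j)) (s j) P))"
  have Vfin: "Sloss (Ys (x j)) (\<Omega> (x j)) \<kappa> (gam Ys c (x j) (\<xi> j)) (s j) P = ereal (V j P)"
    if "j < N" "P \<in> prob_simplex (Ys (x j))" for j P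
    using Sloss_real[of "Ys (x j)" "\<Omega> (x j)" P \<kappa> "gam Ys c (x j) (\<xi> j)" "s j"] good[OF that(1)] that(2)
    by (simp add: V_def)
  have SNQ: "SN N Ys \<Omega> \<kappa> c x \<xi> s Q = ereal (1 / real N * (\<Sum>j<N. V j (Q j)))"
    if "Q \<in> prod_simplex N Ys x" for Q
  proof -
    have "\<forall>j<N. \<exists>r. Sloss (Ys (x j)) (\<Omega> (x j)) \<kappa> (gam Ys c (x j) (\<xi> j)) (s j) (Q j) = ereal r"
      using Vfin that by (auto simp: prod_simplex_def)
    from SN_real[OF this] show ?thesis by (simp add: V_def)
  qed
  have part1: "\<forall>i<N.
       {p \<in> prob_simplex (Ys (x i)). \<forall>p'\<in>prob_simplex (Ys (x i)).
          Sloss (Ys (x i)) (\<Omega> (x i)) \<kappa> (gam Ys c (x i) (\<xi> i)) (s i) p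
          \<le> Sloss (Ys (x i)) (\<Omega> (x i)) \<kappa> (gam Ys c (x i) (\<xi> i)) (s i) p'}
         = {q' i}
     \<and> has_grad_along (Ys (x i)) (RY (Ys (x i))) (\<lambda>\<theta>. real_of_ereal (conjY (Ys (x i)) (\<Omega> (x i)) \<theta>))
          (\<lambda>y. s i y - gam Ys c (x i) (\<xi> i) y / \<kappa>) (q' i)
     \<and> Ymat (Ys (x i)) (q' i) = (\<lambda>k. \<Sum>y\<in>Ys (x i). q' i y * y k)"
  proof (intro allI impI)
    fix i assume i: "i < N"
    have mn: "\<forall>p'\<in>prob_simplex (Ys (x i)).
        Sloss (Ys (x i)) (\<Omega> (x i)) \<kappa> (gam Ys c (x i) (\<xi> i)) (s i) (q' i)
        \<le> Sloss (Ys (x i)) (\<Omega> (x i)) \<kappa> (gam Ys c (x i) (\<xi> i)) (s i) p'"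
    proof
      fix p' assume p': "p' \<in> prob_simplex (Ys (x i))"
      define Q where "Q = q'(i := p')"
      have QS: "Q \<in> prod_simplex N Ys x" using q's p' by (auto simp: Q_def prod_simplex_def)
      have "ereal (1 / real N * (\<Sum>j<N. V j (q' j))) \<le> ereal (1 / real N * (\<Sum>j<N. V j (Q j)))"
        using qmin QS SNQ[OF QS] SNQ[OF q'S] by metis
      then have "1 / real N * (\<Sum>j<N. V j (q' j)) \<le> 1 / real N * (\<Sum>j<N. V j (Q j))" by simp
      then have "(\<Sum>j<N. V j (q' j)) \<le> (\<Sum>j<N. V j (Q j))" using N by (simp add: divide_le_cancel)
      also have "(\<Sum>j<N. V j (Q j)) = (\<Sum>j<N. if j = i then V i p' else V j (q' j))"
        by (intro sum.cong) (auto simp: Q_def)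
      finally have "V i (q' i) \<le> V i p'" by (rule sum_sep[OF i])
      then show "Sloss (Ys (x i)) (\<Omega> (x i)) \<kappa> (gam Ys c (x i) (\<xi> i)) (s i) (q' i)
        \<le> Sloss (Ys (x i)) (\<Omega> (x i)) \<kappa> (gam Ys c (x i) (\<xi> i)) (s i) p'"
        using Vfin[OF i q's[OF i]] Vfin[OF i p'] by simp
    qed
    have g: "finite (Ys (x i))" "proper_convex_dom_simplex (Ys (x i)) (\<Omega> (x i))" "lsc_Y (Ys (x i)) (\<Omega> (x i))"
      "legendre_aff_simplex (Ys (x i)) (\<Omega> (x i))" using good[OF i] by auto
    note A = argmin_i[OF g kappa q's[OF i] mn]
    show "{p \<in> prob_simplex (Ys (x i)). \<forall>p'\<in>prob_simplex (Ys (x i)).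
          Sloss (Ys (x i)) (\<Omega> (x i)) \<kappa> (gam Ys c (x i) (\<xi> i)) (s i) p
          \<le> Sloss (Ys (x i)) (\<Omega> (x i)) \<kappa> (gam Ys c (x i) (\<xi> i)) (s i) p'}
         = {q' i}
     \<and> has_grad_along (Ys (x i)) (RY (Ys (x i))) (\<lambda>\<theta>. real_of_ereal (conjY (Ys (x i)) (\<Omega> (x i)) \<theta>))
          (\<lambda>y. s i y - gam Ys c (x i) (\<xi> i) y / \<kappa>) (q' i)
     \<and> Ymat (Ys (x i)) (q' i) = (\<lambda>k. \<Sum>y\<in>Ys (x i). q' i y * y k)"
      using A by (simp add: Ymat_def)
  qed
  define FY where "FY = (\<lambda>w j. fyd (d (x j)) (OmegaC (Ys (x j)) (\<Omega> (x j))) (\<phi> w (x j)) (Ymat (Ys (x j)) (q' j)))"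
  define B where "B = (\<lambda>w j. real_of_ereal (FY w j))"
  define Aj where "Aj = (\<lambda>j. ipY (Ys (x j)) (gam Ys c (x j) (\<xi> j)) (q' j) + \<kappa> * real_of_ereal (\<Omega> (x j) (q' j))
      - \<kappa> * real_of_ereal (OmegaC (Ys (x j)) (\<Omega> (x j)) (Ymat (Ys (x j)) (q' j))))"
  have FYr: "FY w j = ereal (B w j)" and SLr: "Sloss (Ys (x j)) (\<Omega> (x j)) \<kappa> (gam Ys c (x j) (\<xi> j))
        (scores d Ys (\<phi> w) x j) (q' j) = ereal (Aj j + \<kappa> * B w j)" if j: "j < N" for w j
  proof -
    have g: "finite (Ys (x j))" "proper_convex_dom_simplex (Ys (x j)) (\<Omega> (x j))" "lsc_Y (Ys (x j)) (\<Omega> (x j))"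
      "legendre_aff_simplex (Ys (x j)) (\<Omega> (x j))" using good[OF j] by auto
    have Yd': "Ys (x j) \<subseteq> Rd (d (x j))" using Yd j by blast
    note F = fyd_real[OF g Yd' q's[OF j], of "\<phi> w (x j)"]
    note S = Sloss_real[OF g q's[OF j], of \<kappa> "gam Ys c (x j) (\<xi> j)" "scores d Ys (\<phi> w) x j"]
    show "FY w j = ereal (B w j)" using F by (simp add: FY_def B_def)
    show "Sloss (Ys (x j)) (\<Omega> (x j)) \<kappa> (gam Ys c (x j) (\<xi> j))
        (scores d Ys (\<phi> w) x j) (q' j) = ereal (Aj j + \<kappa> * B w j)"
      using S F by (simp add: FY_def B_def Aj_def scores_def algebra_simps)
  qed
  have SNw: "SN N Ys \<Omega> \<kappa> c x \<xi> (scores d Ys (\<phi> w) x) q' = ereal (1 / real N * (\<Sum>j<N. Aj j + \<kappa> * B w j))" for w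
  proof -
    have "\<forall>j<N. \<exists>r. Sloss (Ys (x j)) (\<Omega> (x j)) \<kappa> (gam Ys c (x j) (\<xi> j)) (scores d Ys (\<phi> w) x j) (q' j) = ereal r"
      using SLr by blast
    from SN_real[OF this] show ?thesis using SLr by simp
  qed
  have FYs: "ereal (1 / real N) * (\<Sum>i<N. FY w i) = ereal (1 / real N * (\<Sum>j<N. B w j))" for w
  proof -
    have "(\<Sum>i<N. FY w i) = (\<Sum>i<N. ereal (B w i))" using FYr by (intro sum.cong) auto
    also have "\<dots> = ereal (\<Sum>i<N. B w i)" by (rule sum_ereal)
    finally show ?thesis by simp
  qed
  have cmp: "SN N Ys \<Omega> \<kappa> c x \<xi> (scores d Ys (\<phi> w) x) q' \<le> SN N Ys \<Omega> \<kappa> c x \<xi> (scores d Ys (\<phi> w') x) q'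
      \<longleftrightarrow> ereal (1 / real N) * (\<Sum>i<N. FY w i) \<le> ereal (1 / real N) * (\<Sum>i<N. FY w' i)" for w w'
  proof -
    have e1: "(\<Sum>j<N. Aj j + \<kappa> * B w j) = (\<Sum>j<N. Aj j) + \<kappa> * (\<Sum>j<N. B w j)" for w
      by (simp add: sum.distrib sum_distrib_left)
    have "1 / real N * ((\<Sum>j<N. Aj j) + \<kappa> * (\<Sum>j<N. B w j)) \<le> 1 / real N * ((\<Sum>j<N. Aj j) + \<kappa> * (\<Sum>j<N. B w' j))
        \<longleftrightarrow> 1 / real N * (\<Sum>j<N. B w j) \<le> 1 / real N * (\<Sum>j<N. B w' j)"
      using N kappa by (simp add: divide_le_cancel mult_le_cancel_left_pos)
    then show ?thesis unfolding SNw FYs e1 by simp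
  qed
  have part2: "{w \<in> W. \<forall>w'\<in>W. SN N Ys \<Omega> \<kappa> c x \<xi> (scores d Ys (\<phi> w) x) q'
                       \<le> SN N Ys \<Omega> \<kappa> c x \<xi> (scores d Ys (\<phi> w') x) q'}
      = {w \<in> W. \<forall>w'\<in>W. ereal (1 / real N) * (\<Sum>i<N. FY w i) \<le> ereal (1 / real N) * (\<Sum>i<N. FY w' i)}"
    using cmp by blast
  have part3: "wbar (Suc t) \<in> {w \<in> W. \<forall>w'\<in>W. ereal (1 / real N) * (\<Sum>i<N. FY w i) \<le> ereal (1 / real N) * (\<Sum>i<N. FY w' i)}"
    using wstep cmp by (auto simp: q'_def)
  show "
    (\<forall>i<N.
       {p \<in> prob_simplex (Ys (x i)). \<forall>p'\<in>prob_simplex (Ys (x i)).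
          Sloss (Ys (x i)) (\<Omega> (x i)) \<kappa> (gam Ys c (x i) (\<xi> i)) (scores d Ys (\<phi> (wbar t)) x i) p
          \<le> Sloss (Ys (x i)) (\<Omega> (x i)) \<kappa> (gam Ys c (x i) (\<xi> i)) (scores d Ys (\<phi> (wbar t)) x i) p'}
         = {q (Suc t) i}
     \<and> has_grad_along (Ys (x i)) (RY (Ys (x i))) (\<lambda>\<theta>. real_of_ereal (conjY (Ys (x i)) (\<Omega> (x i)) \<theta>))
          (\<lambda>y. scores d Ys (\<phi> (wbar t)) x i y - gam Ys c (x i) (\<xi> i) y / \<kappa>) (q (Suc t) i)
     \<and> Ymat (Ys (x i)) (q (Suc t) i) = (\<lambda>k. \<Sum>y\<in>Ys (x i). q (Suc t) i y * y k))
    \<and> {w \<in> W. \<forall>w'\<in>W. SN N Ys \<Omega> \<kappa> c x \<xi> (scores d Ys (\<phi> w) x) (q (Suc t))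
                       \<le> SN N Ys \<Omega> \<kappa> c x \<xi> (scores d Ys (\<phi> w') x) (q (Suc t))}
      = {w \<in> W. \<forall>w'\<in>W.
           ereal (1 / real N) * (\<Sum>i<N. fyd (d (x i)) (OmegaC (Ys (x i)) (\<Omega> (x i))) (\<phi> w (x i)) (Ymat (Ys (x i)) (q (Suc t) i)))
           \<le> ereal (1 / real N) * (\<Sum>i<N. fyd (d (x i)) (OmegaC (Ys (x i)) (\<Omega> (x i))) (\<phi> w' (x i)) (Ymat (Ys (x i)) (q (Suc t) i)))}
    \<and> wbar (Suc t) \<in> {w \<in> W. \<forall>w'\<in>W.
           ereal (1 / real N) * (\<Sum>i<N. fyd (d (x i)) (OmegaC (Ys (x i)) (\<Omega> (x i))) (\<phi> w (x i)) (Ymat (Ys (x i)) (q (Suc t) i)))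
           \<le> ereal (1 / real N) * (\<Sum>i<N. fyd (d (x i)) (OmegaC (Ys (x i)) (\<Omega> (x i))) (\<phi> w' (x i)) (Ymat (Ys (x i)) (q (Suc t) i)))}"
    using part1 part2 part3 unfolding q'_def s_def FY_def by blast
qed

end
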